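(* In the multispectral 2D Toda setting described in the context, for $a,b\in\{1,\dots,D\}$ the Baker function $\Psi_1$ satisfies $$\frac{\partial\Psi_1}{\partial t_{1,(a,b)}}=\frac{\partial^2\Psi_1}{\partial t_{1,a}\partial t_{1,b}}+U_{a,b}\Psi_1,$$ where $U_{a,b}=-V_{a,b}-V_{b,a}$ and $V_{a,b}=\frac{\partial\beta_1}{\partial t_{1,a}}\Lambda_b$.
   Context: Multi-indices ordered by graded lexicographic order; $\chi(\boldsymbol x)$ the semi-infinite vector of monomials in this order; semi-infinite matrices partitioned in blocks indexed by $[k]=\{|\boldsymbol\alpha|=k\}$. Spectral matrices $(\Lambda_a)_{\boldsymbol\alpha,\boldsymbol\beta}=\delta_{\boldsymbol\alpha+\boldsymbol e_a,\boldsymbol\beta}$, $\boldsymbol\Lambda^{\boldsymbol\alpha}=\Lambda_1^{\alpha_1}\cdots\Lambda_D^{\alpha_D}$. $G$ is a semi-infinite complex matrix; times $t_i=(t_{i,\boldsymbol\alpha})_{\boldsymbol\alpha\in\mathbb Z_+^D}$; $t_{1,a}:=t_{1,\boldsymbol e_a}$, $t_{1,(a,b)}:=t_{1,\boldsymbol e_a+\boldsymbol e_b}$; $W^{(0)}_i(t_i)=\exp\big(\sum_{\boldsymbol\alpha}t_{i,\boldsymbol\alpha}\boldsymbol\Lambda^{\boldsymbol\alpha}\big)$; $G(t)=W_1^{(0)}(t_1)G(W_2^{(0)}(t_2))^{-\top}$ assumed to factor as $G(t)=S_1(t)^{-1}H(t)S_2(t)^{-\top}$ with $S_i$ block lower unitriangular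 and $H$ block diagonal. $\beta_1$ is the semi-infinite matrix whose only nonzero blocks are the first block subdiagonal blocks $(S_1)_{[k],[k-1]}$ of $S_1$. Baker function $\Psi_1(t,\boldsymbol z)=S_1(t)W^{(0)}_1(t_1)\chi(\boldsymbol z)$. *)

theory Defs
  imports "HOL-Analysis.Analysis" "HOL-Library.Poly_Mapping"
begin

text \<open>
  Multi-indices in Z_+^D are functions 'd => nat on a
  finite index type 'd (so D = CARD('d) and a, b range over 'd).  Semi-infinite matrices
  are indexed directly by multi-indices; block [k] = multi-indices of length k.
  The times t_{1,alpha}, t_{2,alpha} are formal variables; all t-dependent objects are
  formal power series in these infinitely many variables, with complex coefficients,
  represented as coefficient functions on monomials ('v =>0 nat).
\<close>

type_synonym 'd mi = "'d \<Rightarrow> nat"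

datatype 'd tvar = T1 "'d \<Rightarrow> nat" | T2 "'d \<Rightarrow> nat"

type_synonym 'd fps = "('d tvar \<Rightarrow>\<^sub>0 nat) \<Rightarrow> complex"
type_synonym 'd fmat = "'d mi \<Rightarrow> 'd mi \<Rightarrow> 'd fps"
type_synonym 'd fvec = "'d mi \<Rightarrow> 'd fps"

definition mi_len :: "('d::finite) mi \<Rightarrow> nat" where
  "mi_len \<alpha> = (\<Sum>i\<in>UNIV. \<alpha> i)"

definition mi_add :: "'d mi \<Rightarrow> 'd mi \<Rightarrow> 'd mi" where
  "mi_add \<alpha> \<beta> = (\<lambda>i. \<alpha> i + \<beta> i)"

definition mi_e :: "'d \<Rightarrow> 'd mi" where
  "mi_e a = (\<lambda>i. if i = a then 1 else 0)"

definition fconst :: "complex \<Rightarrow> 'd fps" where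
  "fconst c = (\<lambda>m. if m = 0 then c else 0)"

definition fvar :: "'d tvar \<Rightarrow> 'd fps" where
  "fvar v = (\<lambda>m. if m = Poly_Mapping.single v 1 then 1 else 0)"

definition fadd :: "'d fps \<Rightarrow> 'd fps \<Rightarrow> 'd fps" where
  "fadd f g = (\<lambda>m. f m + g m)"

definition fmul :: "'d fps \<Rightarrow> 'd fps \<Rightarrow> 'd fps" where
  "fmul f g = (\<lambda>m. \<Sum>p\<in>{p. fst p + snd p = m}. f (fst p) * g (snd p))"

definition fderiv :: "'d tvar \<Rightarrow> 'd fps \<Rightarrow> 'd fps" where
  "fderiv v f = (\<lambda>m. of_nat (Poly_Mapping.lookup m v + 1) * f (m + Poly_Mapping.single v 1))"

text \<open>Products are taken coefficientwise; the sums involved are finite in all uses.\<close>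
definition mmul :: "'d fmat \<Rightarrow> 'd fmat \<Rightarrow> 'd fmat" where
  "mmul A B = (\<lambda>\<alpha> \<beta> m. infsum (\<lambda>\<gamma>. fmul (A \<alpha> \<gamma>) (B \<gamma> \<beta>) m) UNIV)"

definition mvmul :: "'d fmat \<Rightarrow> 'd fvec \<Rightarrow> 'd fvec" where
  "mvmul A v = (\<lambda>\<alpha> m. infsum (\<lambda>\<gamma>. fmul (A \<alpha> \<gamma>) (v \<gamma>) m) UNIV)"

definition mone :: "'d fmat" where
  "mone = (\<lambda>\<alpha> \<beta>. fconst (if \<alpha> = \<beta> then 1 else 0))"

definition mtr :: "'d fmat \<Rightarrow> 'd fmat" where
  "mtr A = (\<lambda>\<alpha> \<beta>. A \<beta> \<alpha>)"

definition mneg :: "'d fmat \<Rightarrow> 'd fmat" where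
  "mneg A = (\<lambda>\<alpha> \<beta> m. - A \<alpha> \<beta> m)"

definition madd :: "'d fmat \<Rightarrow> 'd fmat \<Rightarrow> 'd fmat" where
  "madd A B = (\<lambda>\<alpha> \<beta>. fadd (A \<alpha> \<beta>) (B \<alpha> \<beta>))"

definition mderiv :: "'d tvar \<Rightarrow> 'd fmat \<Rightarrow> 'd fmat" where
  "mderiv v A = (\<lambda>\<alpha> \<beta>. fderiv v (A \<alpha> \<beta>))"

definition vderiv :: "'d tvar \<Rightarrow> 'd fvec \<Rightarrow> 'd fvec" where
  "vderiv v x = (\<lambda>\<alpha>. fderiv v (x \<alpha>))"

definition vadd :: "'d fvec \<Rightarrow> 'd fvec \<Rightarrow> 'd fvec" where
  "vadd x y = (\<lambda>\<alpha>. fadd (x \<alpha>) (y \<alpha>))"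

fun mpow :: "'d fmat \<Rightarrow> nat \<Rightarrow> 'd fmat" where
  "mpow A 0 = mone"
| "mpow A (Suc n) = mmul A (mpow A n)"

definition mexp :: "'d fmat \<Rightarrow> 'd fmat" where
  "mexp A = (\<lambda>\<alpha> \<beta> m. infsum (\<lambda>n. mpow A n \<alpha> \<beta> m / fact n) UNIV)"

definition minvertible :: "'d fmat \<Rightarrow> bool" where
  "minvertible A \<longleftrightarrow> (\<exists>B. mmul A B = mone \<and> mmul B A = mone)"

definition minv :: "'d fmat \<Rightarrow> 'd fmat" where
  "minv A = (THE B. mmul A B = mone \<and> mmul B A = mone)"

definition block_lower_unitriangular :: "('d::finite) fmat \<Rightarrow> bool" where
  "block_lower_unitriangular S \<longleftrightarrow>
     (\<forall>\<alpha> \<beta>. mi_len \<beta> > mi_len \<alpha> \<longrightarrow> S \<alpha> \<beta> = fconst 0) \<and>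
     (\<forall>\<alpha> \<beta>. mi_len \<beta> = mi_len \<alpha> \<longrightarrow> S \<alpha> \<beta> = fconst (if \<alpha> = \<beta> then 1 else 0))"

definition block_diagonal :: "('d::finite) fmat \<Rightarrow> bool" where
  "block_diagonal H \<longleftrightarrow> (\<forall>\<alpha> \<beta>. mi_len \<beta> \<noteq> mi_len \<alpha> \<longrightarrow> H \<alpha> \<beta> = fconst 0)"

definition Lam :: "'d \<Rightarrow> 'd fmat" where
  "Lam a = (\<lambda>\<alpha> \<beta>. fconst (if \<beta> = mi_add \<alpha> (mi_e a) then 1 else 0))"

text \<open>Lambda^gamma = Lambda_1^{gamma_1} ... Lambda_D^{gamma_D}; since the Lambda_a are
  commuting shifts this is the shift (Lambda^gamma)_{alpha,beta} = delta_{alpha+gamma,beta}.\<close>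
definition LamPow :: "'d mi \<Rightarrow> 'd fmat" where
  "LamPow \<gamma> = (\<lambda>\<alpha> \<beta>. fconst (if \<beta> = mi_add \<alpha> \<gamma> then 1 else 0))"

text \<open>W_i^{(0)}(t_i) = exp(sum_gamma t_{i,gamma} Lambda^gamma); tc = T1 or T2 selects i\<close>
definition W0 :: "('d mi \<Rightarrow> 'd tvar) \<Rightarrow> 'd fmat" where
  "W0 tc = mexp (\<lambda>\<alpha> \<beta> m. infsum (\<lambda>\<gamma>. fmul (fvar (tc \<gamma>)) (LamPow \<gamma> \<alpha> \<beta>) m) UNIV)"

definition Gt :: "('d mi \<Rightarrow> 'd mi \<Rightarrow> complex) \<Rightarrow> 'd fmat" where
  "Gt G = mmul (mmul (W0 T1) (\<lambda>\<alpha> \<beta>. fconst (G \<alpha> \<beta>))) (mtr (minv (W0 T2)))"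

definition beta1 :: "('d::finite) fmat \<Rightarrow> 'd fmat" where
  "beta1 S = (\<lambda>\<alpha> \<beta>. if mi_len \<alpha> = mi_len \<beta> + 1 then S \<alpha> \<beta> else fconst 0)"

definition chi :: "('d::finite \<Rightarrow> complex) \<Rightarrow> 'd mi \<Rightarrow> complex" where
  "chi z = (\<lambda>\<beta>. \<Prod>i\<in>UNIV. z i ^ \<beta> i)"

definition Psi1 :: "('d::finite) fmat \<Rightarrow> ('d \<Rightarrow> complex) \<Rightarrow> 'd fvec" where
  "Psi1 S z = (let M = mmul S (W0 T1) in
     (\<lambda>\<alpha> m. infsum (\<lambda>\<beta>. M \<alpha> \<beta> m * chi z \<beta>) UNIV))"

definition Vab :: "('d::finite) fmat \<Rightarrow> 'd \<Rightarrow> 'd \<Rightarrow> 'd fmat" where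
  "Vab S a b = mmul (mderiv (T1 (mi_e a)) (beta1 S)) (Lam b)"

definition Uab :: "('d::finite) fmat \<Rightarrow> 'd \<Rightarrow> 'd \<Rightarrow> 'd fmat" where
  "Uab S a b = madd (mneg (Vab S a b)) (mneg (Vab S b a))"

end

theory Submission
  imports Defs
begin
lemma finite_below: "finite {p::'a \<Rightarrow>\<^sub>0 nat. \<exists>q. p + q = m}"
proof -
  let ?B = "{..sum (Poly_Mapping.lookup m) (Poly_Mapping.keys m)}"
  let ?F = "{f. \<forall>x. (x \<in> Poly_Mapping.keys m \<longrightarrow> f x \<in> ?B) \<and> (x \<notin> Poly_Mapping.keys m \<longrightarrow> f x = 0)}"
  have fin: "finite ?F"
    by (rule finite_set_of_finite_funs) simp_all
  have sub: "Poly_Mapping.lookup ` {p. \<exists>q. p + q = m} \<subseteq> ?F"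
  proof
    fix f assume "f \<in> Poly_Mapping.lookup ` {p. \<exists>q. p + q = m}"
    then obtain p q where f: "f = Poly_Mapping.lookup p" and m: "p + q = m" by auto
    have le: "Poly_Mapping.lookup p x \<le> Poly_Mapping.lookup m x" for x
      using m by (auto simp: lookup_add)
    have "f x \<in> ?B" if "x \<in> Poly_Mapping.keys m" for x
    proof -
      have "Poly_Mapping.lookup m x \<le> sum (Poly_Mapping.lookup m) (Poly_Mapping.keys m)"
        by (rule member_le_sum) (use that in simp_all)
      then show ?thesis using le[of x] f by simp
    qed
    moreover have "f x = 0" if "x \<notin> Poly_Mapping.keys m" for x
      using le[of x] that f by (simp add: in_keys_iff)
    ultimately show "f \<in> ?F" by simp
  qed
  have inj: "inj_on Poly_Mapping.lookup {p. \<exists>q. p + q = m}"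
    by (rule inj_onI) (simp add: poly_mapping_eqI)
  show ?thesis using finite_imageD[OF finite_subset[OF sub fin] inj] .
qed

abbreviation (input) splt :: "('a \<Rightarrow>\<^sub>0 nat) \<Rightarrow> (('a \<Rightarrow>\<^sub>0 nat) \<times> ('a \<Rightarrow>\<^sub>0 nat)) set" where
  "splt m \<equiv> {p. fst p + snd p = m}"

lemma finite_splt: "finite (splt (m::'a \<Rightarrow>\<^sub>0 nat))"
proof -
  have "splt m \<subseteq> {p. \<exists>q. p + q = m} \<times> {p. \<exists>q. p + q = m}"
  proof
    fix p :: "('a \<Rightarrow>\<^sub>0 nat) \<times> ('a \<Rightarrow>\<^sub>0 nat)"
    assume "p \<in> splt m"
    then have e: "fst p + snd p = m" by simp
    have e2: "snd p + fst p = m" using e by (simp add: add.commute)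
    have "fst p \<in> {p. \<exists>q. p + q = m}" using e by blast
    moreover have "snd p \<in> {p. \<exists>q. p + q = m}" using e2 by blast
    ultimately show "p \<in> {p. \<exists>q. p + q = m} \<times> {p. \<exists>q. p + q = m}"
      by (simp add: mem_Times_iff)
  qed
  moreover have "finite ({p::'a \<Rightarrow>\<^sub>0 nat. \<exists>q. p + q = m} \<times> {p. \<exists>q. p + q = m})"
    using finite_below by blast
  ultimately show ?thesis by (rule finite_subset)
qed

lemma conv_assoc:
  fixes g :: "('a \<Rightarrow>\<^sub>0 nat) \<Rightarrow> ('a \<Rightarrow>\<^sub>0 nat) \<Rightarrow> ('a \<Rightarrow>\<^sub>0 nat) \<Rightarrow> complex"
  shows "(\<Sum>x\<in>splt m. \<Sum>y\<in>splt (fst x). g (fst y) (snd y) (snd x))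
       = (\<Sum>x\<in>splt m. \<Sum>y\<in>splt (snd x). g (fst x) (fst y) (snd y))"
proof -
  have L: "(\<Sum>x\<in>splt m. \<Sum>y\<in>splt (fst x). g (fst y) (snd y) (snd x))
      = (\<Sum>(x,y)\<in>Sigma (splt m) (\<lambda>x. splt (fst x)). g (fst y) (snd y) (snd x))"
    by (rule sum.Sigma) (auto intro: finite_splt)
  have R: "(\<Sum>x\<in>splt m. \<Sum>y\<in>splt (snd x). g (fst x) (fst y) (snd y))
      = (\<Sum>(x,y)\<in>Sigma (splt m) (\<lambda>x. splt (snd x)). g (fst x) (fst y) (snd y))"
    by (rule sum.Sigma) (auto intro: finite_splt)
  have M: "(\<Sum>(x,y)\<in>Sigma (splt m) (\<lambda>x. splt (fst x)). g (fst y) (snd y) (snd x))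
      = (\<Sum>(x,y)\<in>Sigma (splt m) (\<lambda>x. splt (snd x)). g (fst x) (fst y) (snd y))"
    apply (rule sum.reindex_bij_witness[where j="\<lambda>z. ((fst (snd z), snd (snd z) + snd (fst z)), (snd (snd z), snd (fst z)))"
          and i="\<lambda>z. ((fst (fst z) + fst (snd z), snd (snd z)), (fst (fst z), fst (snd z)))"])
    by (auto simp: add.assoc)
  show ?thesis using L M R by simp
qed

lemma fmul_split: "fmul f g m = (\<Sum>x\<in>splt m. f (fst x) * g (snd x))"
  by (simp add: fmul_def)

lemma fmul_eq0:
  assumes "\<And>p q. p + q = m \<Longrightarrow> f p \<noteq> 0 \<Longrightarrow> g q \<noteq> 0 \<Longrightarrow> False"
  shows "fmul f g m = 0"
  unfolding fmul_split by (rule sum.neutral) (use assms in auto)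

lemma infsum_ne0: "infsum h A \<noteq> (0::complex) \<Longrightarrow> \<exists>x\<in>A. h x \<noteq> 0"
  by (metis infsum_0)

lemma mmul_sum:
  assumes "finite F"
    and "\<And>\<gamma> p q. p + q = m \<Longrightarrow> A \<alpha> \<gamma> p \<noteq> 0 \<Longrightarrow> B \<gamma> \<beta> q \<noteq> 0 \<Longrightarrow> \<gamma> \<in> F"
  shows "mmul A B \<alpha> \<beta> m = (\<Sum>\<gamma>\<in>F. fmul (A \<alpha> \<gamma>) (B \<gamma> \<beta>) m)"
proof -
  have "mmul A B \<alpha> \<beta> m = infsum (\<lambda>\<gamma>. fmul (A \<alpha> \<gamma>) (B \<gamma> \<beta>) m) F"
    unfolding mmul_def
    apply (rule infsum_cong_neutral)
    apply (auto intro!: fmul_eq0)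
    using assms(2) by metis
  then show ?thesis using assms(1) by simp
qed

lemma mmul_ne0:
  assumes "mmul A B \<alpha> \<beta> m \<noteq> 0"
  shows "\<exists>\<gamma> p q. p + q = m \<and> A \<alpha> \<gamma> p \<noteq> 0 \<and> B \<gamma> \<beta> q \<noteq> 0"
proof -
  from assms obtain \<gamma> where "fmul (A \<alpha> \<gamma>) (B \<gamma> \<beta>) m \<noteq> 0"
    unfolding mmul_def using infsum_ne0 by blast
  then show ?thesis using fmul_eq0 by blast
qed

lemma mmul_assoc_at:
  assumes T: "finite T"
    and TT: "\<And>\<gamma> \<delta> p q r. p + q + r = m \<Longrightarrow> A \<alpha> \<gamma> p \<noteq> 0 \<Longrightarrow> B \<gamma> \<delta> q \<noteq> 0 \<Longrightarrow> C \<delta> \<beta> r \<noteq> 0 \<Longrightarrow> (\<gamma>, \<delta>) \<in> T"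
  shows "mmul (mmul A B) C \<alpha> \<beta> m = mmul A (mmul B C) \<alpha> \<beta> m"
proof -
  define G where "G = fst ` T"
  define D where "D = snd ` T"
  have fG: "finite G" and fD: "finite D" using T by (auto simp: G_def D_def)
  define g where "g \<gamma> \<delta> p q r = A \<alpha> \<gamma> p * B \<gamma> \<delta> q * C \<delta> \<beta> r" for \<gamma> \<delta> p q r
  have L1: "mmul (mmul A B) C \<alpha> \<beta> m = (\<Sum>\<delta>\<in>D. fmul (mmul A B \<alpha> \<delta>) (C \<delta> \<beta>) m)"
  proof (rule mmul_sum[OF fD])
    fix \<delta> s r assume sr: "s + r = m" and ab: "mmul A B \<alpha> \<delta> s \<noteq> 0" and c: "C \<delta> \<beta> r \<noteq> 0"
    from mmul_ne0[OF ab] obtain \<gamma> p q where "p + q = s" "A \<alpha> \<gamma> p \<noteq> 0" "B \<gamma> \<delta> q \<noteq> 0" by blast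
    then have "(\<gamma>, \<delta>) \<in> T" using TT[of p q r \<gamma> \<delta>] sr c by simp
    then show "\<delta> \<in> D" unfolding D_def by force
  qed
  have L2: "fmul (mmul A B \<alpha> \<delta>) (C \<delta> \<beta>) m
      = (\<Sum>x\<in>splt m. \<Sum>\<gamma>\<in>G. \<Sum>y\<in>splt (fst x). g \<gamma> \<delta> (fst y) (snd y) (snd x))" for \<delta>
  proof -
    have "fmul (mmul A B \<alpha> \<delta>) (C \<delta> \<beta>) m = (\<Sum>x\<in>splt m. mmul A B \<alpha> \<delta> (fst x) * C \<delta> \<beta> (snd x))"
      by (rule fmul_split)
    also have "\<dots> = (\<Sum>x\<in>splt m. \<Sum>\<gamma>\<in>G. \<Sum>y\<in>splt (fst x). g \<gamma> \<delta> (fst y) (snd y) (snd x))"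
    proof (rule sum.cong[OF refl])
      fix x assume x: "x \<in> splt m"
      show "mmul A B \<alpha> \<delta> (fst x) * C \<delta> \<beta> (snd x)
          = (\<Sum>\<gamma>\<in>G. \<Sum>y\<in>splt (fst x). g \<gamma> \<delta> (fst y) (snd y) (snd x))"
      proof (cases "C \<delta> \<beta> (snd x) = 0")
        case True then show ?thesis by (simp add: g_def)
      next
        case False
        have "mmul A B \<alpha> \<delta> (fst x) = (\<Sum>\<gamma>\<in>G. fmul (A \<alpha> \<gamma>) (B \<gamma> \<delta>) (fst x))"
        proof (rule mmul_sum[OF fG])
          fix \<gamma> p q assume "p + q = fst x" "A \<alpha> \<gamma> p \<noteq> 0" "B \<gamma> \<delta> q \<noteq> 0"
          then have "(\<gamma>, \<delta>) \<in> T" using TT[of p q "snd x" \<gamma> \<delta>] x False by simp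
          then show "\<gamma> \<in> G" unfolding G_def by force
        qed
        then show ?thesis
          by (simp add: fmul_split sum_distrib_right g_def)
      qed
    qed
    finally show ?thesis .
  qed
  have R1: "mmul A (mmul B C) \<alpha> \<beta> m = (\<Sum>\<gamma>\<in>G. fmul (A \<alpha> \<gamma>) (mmul B C \<gamma> \<beta>) m)"
  proof (rule mmul_sum[OF fG])
    fix \<gamma> p t assume pt: "p + t = m" and a: "A \<alpha> \<gamma> p \<noteq> 0" and bc: "mmul B C \<gamma> \<beta> t \<noteq> 0"
    from mmul_ne0[OF bc] obtain \<delta> q r where "q + r = t" "B \<gamma> \<delta> q \<noteq> 0" "C \<delta> \<beta> r \<noteq> 0" by blast
    then have "(\<gamma>, \<delta>) \<in> T" using TT[of p q r \<gamma> \<delta>] pt a by (simp add: add.assoc)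
    then show "\<gamma> \<in> G" unfolding G_def by force
  qed
  have R2: "fmul (A \<alpha> \<gamma>) (mmul B C \<gamma> \<beta>) m
      = (\<Sum>x\<in>splt m. \<Sum>\<delta>\<in>D. \<Sum>y\<in>splt (snd x). g \<gamma> \<delta> (fst x) (fst y) (snd y))" for \<gamma>
  proof -
    have "fmul (A \<alpha> \<gamma>) (mmul B C \<gamma> \<beta>) m = (\<Sum>x\<in>splt m. A \<alpha> \<gamma> (fst x) * mmul B C \<gamma> \<beta> (snd x))"
      by (rule fmul_split)
    also have "\<dots> = (\<Sum>x\<in>splt m. \<Sum>\<delta>\<in>D. \<Sum>y\<in>splt (snd x). g \<gamma> \<delta> (fst x) (fst y) (snd y))"
    proof (rule sum.cong[OF refl])
      fix x assume x: "x \<in> splt m"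
      show "A \<alpha> \<gamma> (fst x) * mmul B C \<gamma> \<beta> (snd x)
          = (\<Sum>\<delta>\<in>D. \<Sum>y\<in>splt (snd x). g \<gamma> \<delta> (fst x) (fst y) (snd y))"
      proof (cases "A \<alpha> \<gamma> (fst x) = 0")
        case True then show ?thesis by (simp add: g_def)
      next
        case False
        have "mmul B C \<gamma> \<beta> (snd x) = (\<Sum>\<delta>\<in>D. fmul (B \<gamma> \<delta>) (C \<delta> \<beta>) (snd x))"
        proof (rule mmul_sum[OF fD])
          fix \<delta> q r assume "q + r = snd x" "B \<gamma> \<delta> q \<noteq> 0" "C \<delta> \<beta> r \<noteq> 0"
          then have "(\<gamma>, \<delta>) \<in> T" using TT[of "fst x" q r \<gamma> \<delta>] x False by (simp add: add.assoc)
          then show "\<delta> \<in> D" unfolding D_def by force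
        qed
        then show ?thesis
          by (simp add: fmul_split sum_distrib_left g_def mult.assoc)
      qed
    qed
    finally show ?thesis .
  qed
  have "mmul (mmul A B) C \<alpha> \<beta> m
      = (\<Sum>\<delta>\<in>D. \<Sum>\<gamma>\<in>G. \<Sum>x\<in>splt m. \<Sum>y\<in>splt (fst x). g \<gamma> \<delta> (fst y) (snd y) (snd x))"
    unfolding L1 L2 by (rule sum.cong[OF refl], rule sum.swap)
  also have "\<dots> = (\<Sum>\<delta>\<in>D. \<Sum>\<gamma>\<in>G. \<Sum>x\<in>splt m. \<Sum>y\<in>splt (snd x). g \<gamma> \<delta> (fst x) (fst y) (snd y))"
    by (simp add: conv_assoc)
  also have "\<dots> = (\<Sum>\<gamma>\<in>G. \<Sum>\<delta>\<in>D. \<Sum>x\<in>splt m. \<Sum>y\<in>splt (snd x). g \<gamma> \<delta> (fst x) (fst y) (snd y))"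
    by (rule sum.swap)
  also have "\<dots> = mmul A (mmul B C) \<alpha> \<beta> m"
    unfolding R1 R2 by (rule sum.cong[OF refl], rule sum.swap)
  finally show ?thesis .
qed

abbreviation (input) "ev v \<equiv> Poly_Mapping.single v (1::nat)"

lemma pm_sub_add: "Poly_Mapping.lookup p v \<noteq> 0 \<Longrightarrow> p - ev v + ev v = p"
  by (rule poly_mapping_eqI) (auto simp: lookup_add lookup_minus lookup_single when_def)

lemma pm_sub_eq: "p + q = m + ev v \<Longrightarrow> Poly_Mapping.lookup p v \<noteq> 0 \<Longrightarrow> p - ev v + q = m"
proof (rule poly_mapping_eqI)
  fix k assume e: "p + q = m + ev v" and nz: "Poly_Mapping.lookup p v \<noteq> 0"
  have "Poly_Mapping.lookup (p + q) k = Poly_Mapping.lookup (m + ev v) k" using e by simp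
  then show "Poly_Mapping.lookup (p - ev v + q) k = Poly_Mapping.lookup m k"
    using nz by (simp add: lookup_add lookup_minus lookup_single when_def split: if_splits)
qed

lemma shift_sum:
  fixes h :: "('a \<Rightarrow>\<^sub>0 nat) \<Rightarrow> ('a \<Rightarrow>\<^sub>0 nat) \<Rightarrow> complex"
  shows "(\<Sum>x\<in>splt m. of_nat (Poly_Mapping.lookup (fst x) v + 1) * h (fst x + ev v) (snd x))
       = (\<Sum>x\<in>splt (m + ev v). of_nat (Poly_Mapping.lookup (fst x) v) * h (fst x) (snd x))"
proof -
  let ?P = "{x\<in>splt (m + ev v). Poly_Mapping.lookup (fst x) v \<noteq> 0}"
  have "(\<Sum>x\<in>splt (m + ev v). of_nat (Poly_Mapping.lookup (fst x) v) * h (fst x) (snd x))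
      = (\<Sum>x\<in>?P. of_nat (Poly_Mapping.lookup (fst x) v) * h (fst x) (snd x))"
    by (rule sum.mono_neutral_right) (auto intro: finite_splt)
  also have "\<dots> = (\<Sum>x\<in>splt m. of_nat (Poly_Mapping.lookup (fst x) v + 1) * h (fst x + ev v) (snd x))"
  proof (rule sum.reindex_bij_witness[where i="\<lambda>x. (fst x + ev v, snd x)" and j="\<lambda>x. (fst x - ev v, snd x)"])
    fix a assume a: "a \<in> ?P"
    from a have nz: "Poly_Mapping.lookup (fst a) v \<noteq> 0" by simp
    show "(fst (fst a - ev v, snd a) + ev v, snd (fst a - ev v, snd a)) = a"
      using pm_sub_add[OF nz] by simp
    from a have e: "fst a + snd a = m + ev v" by simp
    show "(fst a - ev v, snd a) \<in> splt m" using pm_sub_eq[OF e nz] by simp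
    show "of_nat (Poly_Mapping.lookup (fst (fst a - ev v, snd a)) v + 1) *
          h (fst (fst a - ev v, snd a) + ev v) (snd (fst a - ev v, snd a)) =
          of_nat (Poly_Mapping.lookup (fst a) v) * h (fst a) (snd a)"
      using nz pm_sub_add[OF nz] by (simp add: lookup_minus)
  next
    fix b assume b: "b \<in> splt m"
    show "(fst (fst b + ev v, snd b) - ev v, snd (fst b + ev v, snd b)) = b" by simp
    have e: "m = fst b + snd b" using b by simp
    have "fst b + ev v + snd b = m + ev v" unfolding e by (simp add: ac_simps)
    then show "(fst b + ev v, snd b) \<in> ?P" by (simp add: lookup_add)
  qed
  finally show ?thesis by simp
qed

lemma swap_sum:
  fixes h :: "('a \<Rightarrow>\<^sub>0 nat) \<Rightarrow> ('a \<Rightarrow>\<^sub>0 nat) \<Rightarrow> complex"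
  shows "(\<Sum>x\<in>splt m. h (fst x) (snd x)) = (\<Sum>x\<in>splt m. h (snd x) (fst x))"
  by (rule sum.reindex_bij_witness[where i="\<lambda>x. (snd x, fst x)" and j="\<lambda>x. (snd x, fst x)"])
     (auto simp: add.commute)

lemma fderiv_fmul: "fderiv v (fmul f g) = fadd (fmul (fderiv v f) g) (fmul f (fderiv v g))"
proof (rule ext)
  fix m
  let ?lk = "\<lambda>p. Poly_Mapping.lookup p v"
  have A: "fmul (fderiv v f) g m
      = (\<Sum>x\<in>splt (m + ev v). of_nat (?lk (fst x)) * (f (fst x) * g (snd x)))"
    unfolding fmul_split fderiv_def
    using shift_sum[where m=m and v=v and h="\<lambda>a b. f a * g b"] by (simp add: mult.assoc)
  have B: "fmul f (fderiv v g) m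
      = (\<Sum>x\<in>splt (m + ev v). of_nat (?lk (snd x)) * (f (fst x) * g (snd x)))"
  proof -
    have "fmul f (fderiv v g) m = (\<Sum>x\<in>splt m. of_nat (?lk (fst x) + 1) * (g (fst x + ev v) * f (snd x)))"
      unfolding fmul_split fderiv_def
      using swap_sum[where m=m and h="\<lambda>a b. f a * (of_nat (?lk b + 1) * g (b + ev v))"]
      by (simp add: ac_simps)
    also have "\<dots> = (\<Sum>x\<in>splt (m + ev v). of_nat (?lk (fst x)) * (g (fst x) * f (snd x)))"
      by (rule shift_sum)
    also have "\<dots> = (\<Sum>x\<in>splt (m + ev v). of_nat (?lk (snd x)) * (f (fst x) * g (snd x)))"
      using swap_sum[where m="m + ev v" and h="\<lambda>a b. of_nat (?lk a) * (g a * f b)"] by (simp add: ac_simps)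
    finally show ?thesis .
  qed
  have C: "fderiv v (fmul f g) m
      = (\<Sum>x\<in>splt (m + ev v). (of_nat (?lk (fst x)) + of_nat (?lk (snd x))) * (f (fst x) * g (snd x)))"
  proof -
    have "fderiv v (fmul f g) m = (\<Sum>x\<in>splt (m + ev v). of_nat (?lk m + 1) * (f (fst x) * g (snd x)))"
      unfolding fderiv_def fmul_split by (simp add: sum_distrib_left)
    also have "\<dots> = (\<Sum>x\<in>splt (m + ev v). (of_nat (?lk (fst x)) + of_nat (?lk (snd x))) * (f (fst x) * g (snd x)))"
    proof (rule sum.cong[OF refl])
      fix x assume "x \<in> splt (m + ev v)"
      then have "?lk (fst x + snd x) = ?lk (m + ev v)" by simp
      then have "?lk (fst x) + ?lk (snd x) = ?lk m + 1" by (simp add: lookup_add)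
      then have "(of_nat (?lk m + 1)::complex) = of_nat (?lk (fst x)) + of_nat (?lk (snd x))"
        by (metis of_nat_add)
      then show "of_nat (?lk m + 1) * (f (fst x) * g (snd x))
          = (of_nat (?lk (fst x)) + of_nat (?lk (snd x))) * (f (fst x) * g (snd x))" by simp
    qed
    finally show ?thesis .
  qed
  show "fderiv v (fmul f g) m = fadd (fmul (fderiv v f) g) (fmul f (fderiv v g)) m"
    unfolding fadd_def A B C by (simp add: distrib_right sum.distrib)
qed

definition pf :: "'d fmat \<Rightarrow> 'd fmat \<Rightarrow> bool" where
  "pf A B \<longleftrightarrow> (\<forall>\<alpha> \<beta> m. finite {\<gamma>. \<exists>p q. p + q = m \<and> A \<alpha> \<gamma> p \<noteq> 0 \<and> B \<gamma> \<beta> q \<noteq> 0})"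

definition lrf :: "'d fmat \<Rightarrow> bool" where
  "lrf A \<longleftrightarrow> (\<forall>\<alpha> m. finite {\<beta>. \<exists>p q. p + q = m \<and> A \<alpha> \<beta> p \<noteq> 0})"

definition clf :: "'d fmat \<Rightarrow> bool" where
  "clf A \<longleftrightarrow> (\<forall>\<beta> m. finite {\<alpha>. \<exists>p q. p + q = m \<and> A \<alpha> \<beta> p \<noteq> 0})"

lemma lrf_pf: "lrf A \<Longrightarrow> pf A B"
proof (unfold pf_def, intro allI)
  fix \<alpha> \<beta> m assume "lrf A"
  then have "finite {\<gamma>. \<exists>p q. p + q = m \<and> A \<alpha> \<gamma> p \<noteq> 0}" by (simp add: lrf_def)
  then show "finite {\<gamma>. \<exists>p q. p + q = m \<and> A \<alpha> \<gamma> p \<noteq> 0 \<and> B \<gamma> \<beta> q \<noteq> 0}"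
    by (rule finite_subset[rotated]) blast
qed

lemma clf_pf: "clf B \<Longrightarrow> pf A B"
  unfolding pf_def clf_def
proof (intro allI)
  fix \<alpha> \<beta> m
  assume "\<forall>\<beta> m. finite {\<alpha>. \<exists>p q. p + q = m \<and> B \<alpha> \<beta> p \<noteq> 0}"
  then have "finite {\<gamma>. \<exists>p q. p + q = m \<and> B \<gamma> \<beta> p \<noteq> 0}" by blast
  moreover have "{\<gamma>. \<exists>p q. p + q = m \<and> A \<alpha> \<gamma> p \<noteq> 0 \<and> B \<gamma> \<beta> q \<noteq> 0}
      \<subseteq> {\<gamma>. \<exists>p q. p + q = m \<and> B \<gamma> \<beta> p \<noteq> 0}"
  proof (rule subsetI, elim CollectE exE conjE)
    fix \<gamma> p q assume "p + q = m" "B \<gamma> \<beta> q \<noteq> 0"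
    then show "\<gamma> \<in> {\<gamma>. \<exists>p q. p + q = m \<and> B \<gamma> \<beta> p \<noteq> 0}" using add.commute[of q p] by blast
  qed
  ultimately show "finite {\<gamma>. \<exists>p q. p + q = m \<and> A \<alpha> \<gamma> p \<noteq> 0 \<and> B \<gamma> \<beta> q \<noteq> 0}"
    by (rule finite_subset[rotated])
qed

lemma mmul_sum_pf:
  assumes "pf A B"
  shows "mmul A B \<alpha> \<beta> m = (\<Sum>\<gamma>\<in>{\<gamma>. \<exists>p q. p + q = m \<and> A \<alpha> \<gamma> p \<noteq> 0 \<and> B \<gamma> \<beta> q \<noteq> 0}. fmul (A \<alpha> \<gamma>) (B \<gamma> \<beta>) m)"
  by (rule mmul_sum) (use assms in \<open>auto simp: pf_def\<close>)

lemma mmul_sum_pf':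
  assumes "pf A B" "finite F" "{\<gamma>. \<exists>p q. p + q = m \<and> A \<alpha> \<gamma> p \<noteq> 0 \<and> B \<gamma> \<beta> q \<noteq> 0} \<subseteq> F"
  shows "mmul A B \<alpha> \<beta> m = (\<Sum>\<gamma>\<in>F. fmul (A \<alpha> \<gamma>) (B \<gamma> \<beta>) m)"
  by (rule mmul_sum) (use assms in auto)

lemma fderiv_sum: "fderiv v (\<lambda>m. \<Sum>\<gamma>\<in>F. f \<gamma> m) m = (\<Sum>\<gamma>\<in>F. fderiv v (f \<gamma>) m)"
  by (simp add: fderiv_def sum_distrib_left)

lemma mderiv_mmul:
  assumes "pf A B"
  shows "mderiv v (mmul A B) = madd (mmul (mderiv v A) B) (mmul A (mderiv v B))"
proof (intro ext)
  fix \<alpha> \<beta> m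
  define F where "F = {\<gamma>. \<exists>p q. p + q = m + ev v \<and> A \<alpha> \<gamma> p \<noteq> 0 \<and> B \<gamma> \<beta> q \<noteq> 0}"
  have fF: "finite F" using assms by (simp add: pf_def F_def)
  have e1: "mmul A B \<alpha> \<beta> (m + ev v) = (\<Sum>\<gamma>\<in>F. fmul (A \<alpha> \<gamma>) (B \<gamma> \<beta>) (m + ev v))"
    by (rule mmul_sum[OF fF]) (auto simp: F_def)
  have e2: "mmul (mderiv v A) B \<alpha> \<beta> m = (\<Sum>\<gamma>\<in>F. fmul (mderiv v A \<alpha> \<gamma>) (B \<gamma> \<beta>) m)"
  proof (rule mmul_sum[OF fF])
    fix \<gamma> p q assume "p + q = m" "mderiv v A \<alpha> \<gamma> p \<noteq> 0" "B \<gamma> \<beta> q \<noteq> 0"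
    then have "p + ev v + q = m + ev v" "A \<alpha> \<gamma> (p + ev v) \<noteq> 0"
      by (auto simp: mderiv_def fderiv_def ac_simps)
    then show "\<gamma> \<in> F" using \<open>B \<gamma> \<beta> q \<noteq> 0\<close> unfolding F_def by blast
  qed
  have e3: "mmul A (mderiv v B) \<alpha> \<beta> m = (\<Sum>\<gamma>\<in>F. fmul (A \<alpha> \<gamma>) (mderiv v B \<gamma> \<beta>) m)"
  proof (rule mmul_sum[OF fF])
    fix \<gamma> p q assume "p + q = m" "A \<alpha> \<gamma> p \<noteq> 0" "mderiv v B \<gamma> \<beta> q \<noteq> 0"
    then have "p + (q + ev v) = m + ev v" "B \<gamma> \<beta> (q + ev v) \<noteq> 0"
      by (auto simp: mderiv_def fderiv_def ac_simps)
    then show "\<gamma> \<in> F" using \<open>A \<alpha> \<gamma> p \<noteq> 0\<close> unfolding F_def by blast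
  qed
  have "mderiv v (mmul A B) \<alpha> \<beta> m = (\<Sum>\<gamma>\<in>F. fderiv v (fmul (A \<alpha> \<gamma>) (B \<gamma> \<beta>)) m)"
    unfolding mderiv_def fderiv_def e1 by (simp add: sum_distrib_left)
  also have "\<dots> = madd (mmul (mderiv v A) B) (mmul A (mderiv v B)) \<alpha> \<beta> m"
    unfolding madd_def fadd_def e2 e3 fderiv_fmul by (simp add: sum.distrib mderiv_def)
  finally show "mderiv v (mmul A B) \<alpha> \<beta> m = madd (mmul (mderiv v A) B) (mmul A (mderiv v B)) \<alpha> \<beta> m" .
qed

lemma fmul_fadd_left: "fmul (fadd f g) h = fadd (fmul f h) (fmul g h)"
  by (rule ext) (simp add: fmul_def fadd_def distrib_right sum.distrib)

lemma fmul_fadd_right: "fmul h (fadd f g) = fadd (fmul h f) (fmul h g)"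
  by (rule ext) (simp add: fmul_def fadd_def distrib_left sum.distrib)

lemma madd_mmul_left:
  assumes "pf A C" "pf B C"
  shows "mmul (madd A B) C = madd (mmul A C) (mmul B C)"
proof (intro ext)
  fix \<alpha> \<beta> m
  define F where "F = {\<gamma>. \<exists>p q. p + q = m \<and> A \<alpha> \<gamma> p \<noteq> 0 \<and> C \<gamma> \<beta> q \<noteq> 0}
     \<union> {\<gamma>. \<exists>p q. p + q = m \<and> B \<alpha> \<gamma> p \<noteq> 0 \<and> C \<gamma> \<beta> q \<noteq> 0}"
  have fF: "finite F" using assms by (simp add: pf_def F_def)
  have 1: "mmul (madd A B) C \<alpha> \<beta> m = (\<Sum>\<gamma>\<in>F. fmul (madd A B \<alpha> \<gamma>) (C \<gamma> \<beta>) m)"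
  proof (rule mmul_sum[OF fF])
    fix \<gamma> p q assume h: "p + q = m" "madd A B \<alpha> \<gamma> p \<noteq> 0" "C \<gamma> \<beta> q \<noteq> 0"
    then have "A \<alpha> \<gamma> p \<noteq> 0 \<or> B \<alpha> \<gamma> p \<noteq> 0" by (auto simp: madd_def fadd_def)
    then show "\<gamma> \<in> F" using h unfolding F_def by blast
  qed
  have 2: "mmul A C \<alpha> \<beta> m = (\<Sum>\<gamma>\<in>F. fmul (A \<alpha> \<gamma>) (C \<gamma> \<beta>) m)"
    by (rule mmul_sum[OF fF]) (auto simp: F_def)
  have 3: "mmul B C \<alpha> \<beta> m = (\<Sum>\<gamma>\<in>F. fmul (B \<alpha> \<gamma>) (C \<gamma> \<beta>) m)"
    by (rule mmul_sum[OF fF]) (auto simp: F_def)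
  show "mmul (madd A B) C \<alpha> \<beta> m = madd (mmul A C) (mmul B C) \<alpha> \<beta> m"
  proof -
    have "madd (mmul A C) (mmul B C) \<alpha> \<beta> m = mmul A C \<alpha> \<beta> m + mmul B C \<alpha> \<beta> m"
      by (simp add: madd_def fadd_def)
    also have "\<dots> = (\<Sum>\<gamma>\<in>F. fmul (A \<alpha> \<gamma>) (C \<gamma> \<beta>) m + fmul (B \<alpha> \<gamma>) (C \<gamma> \<beta>) m)"
      unfolding 2 3 by (simp add: sum.distrib)
    also have "\<dots> = (\<Sum>\<gamma>\<in>F. fmul (madd A B \<alpha> \<gamma>) (C \<gamma> \<beta>) m)"
      unfolding madd_def fmul_fadd_left by (simp add: fadd_def)
    finally show ?thesis using 1 by simp
  qed
qed

lemma madd_mmul_right: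
  assumes "pf C A" "pf C B"
  shows "mmul C (madd A B) = madd (mmul C A) (mmul C B)"
proof (intro ext)
  fix \<alpha> \<beta> m
  define F where "F = {\<gamma>. \<exists>p q. p + q = m \<and> C \<alpha> \<gamma> p \<noteq> 0 \<and> A \<gamma> \<beta> q \<noteq> 0}
     \<union> {\<gamma>. \<exists>p q. p + q = m \<and> C \<alpha> \<gamma> p \<noteq> 0 \<and> B \<gamma> \<beta> q \<noteq> 0}"
  have fF: "finite F" using assms by (simp add: pf_def F_def)
  have 1: "mmul C (madd A B) \<alpha> \<beta> m = (\<Sum>\<gamma>\<in>F. fmul (C \<alpha> \<gamma>) (madd A B \<gamma> \<beta>) m)"
  proof (rule mmul_sum[OF fF])
    fix \<gamma> p q assume h: "p + q = m" "C \<alpha> \<gamma> p \<noteq> 0" "madd A B \<gamma> \<beta> q \<noteq> 0"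
    then have "A \<gamma> \<beta> q \<noteq> 0 \<or> B \<gamma> \<beta> q \<noteq> 0" by (auto simp: madd_def fadd_def)
    then show "\<gamma> \<in> F" using h unfolding F_def by blast
  qed
  have 2: "mmul C A \<alpha> \<beta> m = (\<Sum>\<gamma>\<in>F. fmul (C \<alpha> \<gamma>) (A \<gamma> \<beta>) m)"
    by (rule mmul_sum[OF fF]) (auto simp: F_def)
  have 3: "mmul C B \<alpha> \<beta> m = (\<Sum>\<gamma>\<in>F. fmul (C \<alpha> \<gamma>) (B \<gamma> \<beta>) m)"
    by (rule mmul_sum[OF fF]) (auto simp: F_def)
  show "mmul C (madd A B) \<alpha> \<beta> m = madd (mmul C A) (mmul C B) \<alpha> \<beta> m"
  proof -
    have "madd (mmul C A) (mmul C B) \<alpha> \<beta> m = mmul C A \<alpha> \<beta> m + mmul C B \<alpha> \<beta> m"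
      by (simp add: madd_def fadd_def)
    also have "\<dots> = (\<Sum>\<gamma>\<in>F. fmul (C \<alpha> \<gamma>) (A \<gamma> \<beta>) m + fmul (C \<alpha> \<gamma>) (B \<gamma> \<beta>) m)"
      unfolding 2 3 by (simp add: sum.distrib)
    also have "\<dots> = (\<Sum>\<gamma>\<in>F. fmul (C \<alpha> \<gamma>) (madd A B \<gamma> \<beta>) m)"
      unfolding madd_def fmul_fadd_right by (simp add: fadd_def)
    finally show ?thesis using 1 by simp
  qed
qed

lemma split3:
  fixes p q r m :: "'a \<Rightarrow>\<^sub>0 nat"
  assumes "p + q + r = m"
  shows "p + (q + r) = m" "q + (p + r) = m" "r + (p + q) = m"
  using assms by (simp_all add: ac_simps)

lemma assoc_ll:
  assumes "lrf A" "lrf B"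
  shows "mmul (mmul A B) C = mmul A (mmul B C)"
proof (intro ext)
  fix \<alpha> \<beta> m
  define \<Gamma> where "\<Gamma> = {\<gamma>. \<exists>p q. p + q = m \<and> A \<alpha> \<gamma> p \<noteq> 0}"
  define \<Delta> where "\<Delta> \<gamma> = {\<delta>. \<exists>p q. p + q = m \<and> B \<gamma> \<delta> p \<noteq> 0}" for \<gamma>
  have f1: "finite \<Gamma>" using assms(1) by (simp add: lrf_def \<Gamma>_def)
  have f2: "finite (\<Delta> \<gamma>)" for \<gamma> using assms(2) by (simp add: lrf_def \<Delta>_def)
  show "mmul (mmul A B) C \<alpha> \<beta> m = mmul A (mmul B C) \<alpha> \<beta> m"
  proof (rule mmul_assoc_at[where T="\<Gamma> \<times> (\<Union>\<gamma>\<in>\<Gamma>. \<Delta> \<gamma>)"])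
    show "finite (\<Gamma> \<times> (\<Union>\<gamma>\<in>\<Gamma>. \<Delta> \<gamma>))" using f1 f2 by blast
  next
    fix \<gamma> \<delta> p q r assume h: "p + q + r = m" "A \<alpha> \<gamma> p \<noteq> 0" "B \<gamma> \<delta> q \<noteq> 0"
    have g: "\<gamma> \<in> \<Gamma>" unfolding \<Gamma>_def using h(2) split3(1)[OF h(1)] by blast
    have "\<delta> \<in> \<Delta> \<gamma>" unfolding \<Delta>_def using h(3) split3(2)[OF h(1)] by blast
    then show "(\<gamma>, \<delta>) \<in> \<Gamma> \<times> (\<Union>\<gamma>\<in>\<Gamma>. \<Delta> \<gamma>)" using g by blast
  qed
qed

lemma assoc_lc:
  assumes "lrf A" "clf C"
  shows "mmul (mmul A B) C = mmul A (mmul B C)"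
proof (intro ext)
  fix \<alpha> \<beta> m
  define \<Gamma> where "\<Gamma> = {\<gamma>. \<exists>p q. p + q = m \<and> A \<alpha> \<gamma> p \<noteq> 0}"
  define \<Delta> where "\<Delta> = {\<delta>. \<exists>p q. p + q = m \<and> C \<delta> \<beta> p \<noteq> 0}"
  have f1: "finite \<Gamma>" using assms(1) by (simp add: lrf_def \<Gamma>_def)
  have f2: "finite \<Delta>" using assms(2) by (simp add: clf_def \<Delta>_def)
  show "mmul (mmul A B) C \<alpha> \<beta> m = mmul A (mmul B C) \<alpha> \<beta> m"
  proof (rule mmul_assoc_at[where T="\<Gamma> \<times> \<Delta>"])
    show "finite (\<Gamma> \<times> \<Delta>)" using f1 f2 by blast
  next
    fix \<gamma> \<delta> p q r assume h: "p + q + r = m" "A \<alpha> \<gamma> p \<noteq> 0" "C \<delta> \<beta> r \<noteq> 0"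
    have g: "\<gamma> \<in> \<Gamma>" unfolding \<Gamma>_def using h(2) split3(1)[OF h(1)] by blast
    have "\<delta> \<in> \<Delta>" unfolding \<Delta>_def using h(3) split3(3)[OF h(1)] by blast
    then show "(\<gamma>, \<delta>) \<in> \<Gamma> \<times> \<Delta>" using g by blast
  qed
qed

lemma assoc_cc:
  assumes "clf B" "clf C"
  shows "mmul (mmul A B) C = mmul A (mmul B C)"
proof (intro ext)
  fix \<alpha> \<beta> m
  define \<Delta> where "\<Delta> = {\<delta>. \<exists>p q. p + q = m \<and> C \<delta> \<beta> p \<noteq> 0}"
  define \<Gamma> where "\<Gamma> \<delta> = {\<gamma>. \<exists>p q. p + q = m \<and> B \<gamma> \<delta> p \<noteq> 0}" for \<delta>
  have f1: "finite (\<Gamma> \<delta>)" for \<delta> using assms(1) by (simp add: clf_def \<Gamma>_def)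
  have f2: "finite \<Delta>" using assms(2) by (simp add: clf_def \<Delta>_def)
  show "mmul (mmul A B) C \<alpha> \<beta> m = mmul A (mmul B C) \<alpha> \<beta> m"
  proof (rule mmul_assoc_at[where T="(\<Union>\<delta>\<in>\<Delta>. \<Gamma> \<delta>) \<times> \<Delta>"])
    show "finite ((\<Union>\<delta>\<in>\<Delta>. \<Gamma> \<delta>) \<times> \<Delta>)" using f1 f2 by blast
  next
    fix \<gamma> \<delta> p q r assume h: "p + q + r = m" "B \<gamma> \<delta> q \<noteq> 0" "C \<delta> \<beta> r \<noteq> 0"
    have g: "\<gamma> \<in> \<Gamma> \<delta>" unfolding \<Gamma>_def using h(2) split3(2)[OF h(1)] by blast
    have "\<delta> \<in> \<Delta>" unfolding \<Delta>_def using h(3) split3(3)[OF h(1)] by blast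
    then show "(\<gamma>, \<delta>) \<in> (\<Union>\<delta>\<in>\<Delta>. \<Gamma> \<delta>) \<times> \<Delta>" using g by blast
  qed
qed

lemma lrf_mmul:
  assumes "lrf A" "lrf B"
  shows "lrf (mmul A B)"
  unfolding lrf_def
proof (intro allI)
  fix \<alpha> m
  define \<Gamma> where "\<Gamma> = {\<gamma>. \<exists>p q. p + q = m \<and> A \<alpha> \<gamma> p \<noteq> 0}"
  define \<Delta> where "\<Delta> \<gamma> = {\<delta>. \<exists>p q. p + q = m \<and> B \<gamma> \<delta> p \<noteq> 0}" for \<gamma>
  have f1: "finite \<Gamma>" using assms(1) by (simp add: lrf_def \<Gamma>_def)
  have f2: "finite (\<Delta> \<gamma>)" for \<gamma> using assms(2) by (simp add: lrf_def \<Delta>_def)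
  have "{\<beta>. \<exists>s r. s + r = m \<and> mmul A B \<alpha> \<beta> s \<noteq> 0} \<subseteq> (\<Union>\<gamma>\<in>\<Gamma>. \<Delta> \<gamma>)"
  proof (rule subsetI, elim CollectE exE conjE)
    fix \<beta> s r assume sr: "s + r = m" and nz: "mmul A B \<alpha> \<beta> s \<noteq> 0"
    from mmul_ne0[OF nz] obtain \<gamma> p q where h: "p + q = s" "A \<alpha> \<gamma> p \<noteq> 0" "B \<gamma> \<beta> q \<noteq> 0" by blast
    have e: "p + q + r = m" using h(1) sr by simp
    have "\<gamma> \<in> \<Gamma>" unfolding \<Gamma>_def using h(2) split3(1)[OF e] by blast
    moreover have "\<beta> \<in> \<Delta> \<gamma>" unfolding \<Delta>_def using h(3) split3(2)[OF e] by blast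
    ultimately show "\<beta> \<in> (\<Union>\<gamma>\<in>\<Gamma>. \<Delta> \<gamma>)" by blast
  qed
  then show "finite {\<beta>. \<exists>s r. s + r = m \<and> mmul A B \<alpha> \<beta> s \<noteq> 0}"
    by (rule finite_subset) (use f1 f2 in blast)
qed

lemma clf_mmul:
  assumes "clf A" "clf B"
  shows "clf (mmul A B)"
  unfolding clf_def
proof (intro allI)
  fix \<beta> m
  define \<Delta> where "\<Delta> = {\<gamma>. \<exists>p q. p + q = m \<and> B \<gamma> \<beta> p \<noteq> 0}"
  define \<Gamma> where "\<Gamma> \<gamma> = {\<alpha>. \<exists>p q. p + q = m \<and> A \<alpha> \<gamma> p \<noteq> 0}" for \<gamma>
  have f1: "finite \<Delta>" using assms(2) by (simp add: clf_def \<Delta>_def)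
  have f2: "finite (\<Gamma> \<gamma>)" for \<gamma> using assms(1) by (simp add: clf_def \<Gamma>_def)
  have "{\<alpha>. \<exists>s r. s + r = m \<and> mmul A B \<alpha> \<beta> s \<noteq> 0} \<subseteq> (\<Union>\<gamma>\<in>\<Delta>. \<Gamma> \<gamma>)"
  proof (rule subsetI, elim CollectE exE conjE)
    fix \<alpha> s r assume sr: "s + r = m" and nz: "mmul A B \<alpha> \<beta> s \<noteq> 0"
    from mmul_ne0[OF nz] obtain \<gamma> p q where h: "p + q = s" "A \<alpha> \<gamma> p \<noteq> 0" "B \<gamma> \<beta> q \<noteq> 0" by blast
    have e: "p + q + r = m" using h(1) sr by simp
    have "\<alpha> \<in> \<Gamma> \<gamma>" unfolding \<Gamma>_def using h(2) split3(1)[OF e] by blast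
    moreover have "\<gamma> \<in> \<Delta>" unfolding \<Delta>_def using h(3) split3(2)[OF e] by blast
    ultimately show "\<alpha> \<in> (\<Union>\<gamma>\<in>\<Delta>. \<Gamma> \<gamma>)" by blast
  qed
  then show "finite {\<alpha>. \<exists>s r. s + r = m \<and> mmul A B \<alpha> \<beta> s \<noteq> 0}"
    by (rule finite_subset) (use f1 f2 in blast)
qed

lemma fmul_fconst_right: "fmul f (fconst c) m = f m * c"
proof -
  have "fmul f (fconst c) m = (\<Sum>x\<in>splt m. f (fst x) * fconst c (snd x))" by (rule fmul_split)
  also have "\<dots> = (\<Sum>x\<in>splt m. if x = (m, 0) then f m * c else 0)"
    by (rule sum.cong) (auto simp: fconst_def)
  finally show ?thesis by (simp add: finite_splt)
qed

lemma fmul_fconst_left: "fmul (fconst c) f m = c * f m"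
proof -
  have "fmul (fconst c) f m = (\<Sum>x\<in>splt m. fconst c (fst x) * f (snd x))" by (rule fmul_split)
  also have "\<dots> = (\<Sum>x\<in>splt m. if x = (0, m) then c * f m else 0)"
    by (rule sum.cong) (auto simp: fconst_def)
  finally show ?thesis by (simp add: finite_splt)
qed

lemma fconst0 [simp]: "fconst 0 m = 0"
  by (simp add: fconst_def)

lemma fconst_ne0: "fconst c m \<noteq> 0 \<Longrightarrow> m = 0"
  by (simp add: fconst_def split: if_splits)

lemma fderiv_fconst [simp]: "fderiv v (fconst c) = (\<lambda>m. 0)"
proof (rule ext)
  fix m
  have "m + ev v \<noteq> 0"
  proof
    assume "m + ev v = 0"
    then have "Poly_Mapping.lookup (m + ev v) v = 0" by simp
    then show False by (simp add: lookup_add)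
  qed
  then show "fderiv v (fconst c) m = 0" by (simp add: fderiv_def fconst_def)
qed

lemma lrf_mone: "lrf mone"
proof -
  have "{\<beta>. \<exists>p q. p + q = m \<and> mone \<alpha> \<beta> p \<noteq> 0} \<subseteq> {\<alpha>}" for \<alpha> m
    by (auto simp: mone_def fconst_def split: if_splits)
  note sub = this
  show ?thesis unfolding lrf_def
  proof (intro allI)
    fix \<alpha> m show "finite {\<beta>. \<exists>p q. p + q = m \<and> mone \<alpha> \<beta> p \<noteq> 0}"
      by (rule finite_subset[OF sub]) simp
  qed
qed

lemma clf_mone: "clf mone"
proof -
  have "{\<alpha>. \<exists>p q. p + q = m \<and> mone \<alpha> \<beta> p \<noteq> 0} \<subseteq> {\<beta>}" for \<beta> m
    by (auto simp: mone_def fconst_def split: if_splits)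
  note sub = this
  show ?thesis unfolding clf_def
  proof (intro allI)
    fix \<beta> m show "finite {\<alpha>. \<exists>p q. p + q = m \<and> mone \<alpha> \<beta> p \<noteq> 0}"
      by (rule finite_subset[OF sub]) simp
  qed
qed

lemma mmul_mone_right: "mmul A mone = A"
proof (intro ext)
  fix \<alpha> \<beta> m
  have "mmul A mone \<alpha> \<beta> m = (\<Sum>\<gamma>\<in>{\<beta>}. fmul (A \<alpha> \<gamma>) (mone \<gamma> \<beta>) m)"
    by (rule mmul_sum) (auto simp: mone_def fconst_def split: if_splits)
  then show "mmul A mone \<alpha> \<beta> m = A \<alpha> \<beta> m" by (simp add: mone_def fmul_fconst_right)
qed

lemma mmul_mone_left: "mmul mone A = A"
proof (intro ext)
  fix \<alpha> \<beta> m
  have "mmul mone A \<alpha> \<beta> m = (\<Sum>\<gamma>\<in>{\<alpha>}. fmul (mone \<alpha> \<gamma>) (A \<gamma> \<beta>) m)"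
    by (rule mmul_sum) (auto simp: mone_def fconst_def split: if_splits)
  then show "mmul mone A \<alpha> \<beta> m = A \<alpha> \<beta> m" by (simp add: mone_def fmul_fconst_left)
qed

definition mzero :: "'d fmat" where "mzero = (\<lambda>\<alpha> \<beta> m. 0)"

lemma mmul_mzero_right: "mmul A mzero = mzero"
  unfolding mmul_def mzero_def by (simp add: fmul_def)

lemma mmul_mzero_left: "mmul mzero A = mzero"
  unfolding mmul_def mzero_def by (simp add: fmul_def)

lemma lrf_madd: "lrf A \<Longrightarrow> lrf B \<Longrightarrow> lrf (madd A B)"
proof -
  assume a: "lrf A" "lrf B"
  have "{\<beta>. \<exists>p q. p + q = m \<and> madd A B \<alpha> \<beta> p \<noteq> 0}
     \<subseteq> {\<beta>. \<exists>p q. p + q = m \<and> A \<alpha> \<beta> p \<noteq> 0} \<union> {\<beta>. \<exists>p q. p + q = m \<and> B \<alpha> \<beta> p \<noteq> 0}" for \<alpha> m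
    by (auto simp: madd_def fadd_def) (metis add_cancel_right_left)
  then show ?thesis using a unfolding lrf_def by (meson finite_Un finite_subset)
qed

lemma clf_madd: "clf A \<Longrightarrow> clf B \<Longrightarrow> clf (madd A B)"
proof -
  assume a: "clf A" "clf B"
  have "{\<alpha>. \<exists>p q. p + q = m \<and> madd A B \<alpha> \<beta> p \<noteq> 0}
     \<subseteq> {\<alpha>. \<exists>p q. p + q = m \<and> A \<alpha> \<beta> p \<noteq> 0} \<union> {\<alpha>. \<exists>p q. p + q = m \<and> B \<alpha> \<beta> p \<noteq> 0}" for \<beta> m
    by (auto simp: madd_def fadd_def) (metis add_cancel_right_left)
  then show ?thesis using a unfolding clf_def by (meson finite_Un finite_subset)
qed

lemma lrf_mneg: "lrf A \<Longrightarrow> lrf (mneg A)"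
  unfolding lrf_def mneg_def by simp

lemma clf_mneg: "clf A \<Longrightarrow> clf (mneg A)"
  unfolding clf_def mneg_def by simp

lemma lrf_mtr: "lrf (mtr A) \<longleftrightarrow> clf A"
  unfolding lrf_def clf_def mtr_def by simp

lemma clf_mtr: "clf (mtr A) \<longleftrightarrow> lrf A"
  unfolding lrf_def clf_def mtr_def by simp

lemma lrf_mderiv: "lrf A \<Longrightarrow> lrf (mderiv v A)"
proof -
  assume a: "lrf A"
  have "{\<beta>. \<exists>p q. p + q = m \<and> mderiv v A \<alpha> \<beta> p \<noteq> 0}
     \<subseteq> {\<beta>. \<exists>p q. p + q = m + ev v \<and> A \<alpha> \<beta> p \<noteq> 0}" for \<alpha> m
  proof (rule subsetI, elim CollectE exE conjE)
    fix \<beta> p q assume "p + q = m" "mderiv v A \<alpha> \<beta> p \<noteq> 0"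
    then have "p + ev v + q = m + ev v" "A \<alpha> \<beta> (p + ev v) \<noteq> 0"
      by (auto simp: mderiv_def fderiv_def ac_simps)
    then show "\<beta> \<in> {\<beta>. \<exists>p q. p + q = m + ev v \<and> A \<alpha> \<beta> p \<noteq> 0}" by blast
  qed
  then show ?thesis using a unfolding lrf_def by (meson finite_subset)
qed

lemma clf_mderiv: "clf A \<Longrightarrow> clf (mderiv v A)"
proof -
  assume a: "clf A"
  have "{\<alpha>. \<exists>p q. p + q = m \<and> mderiv v A \<alpha> \<beta> p \<noteq> 0}
     \<subseteq> {\<alpha>. \<exists>p q. p + q = m + ev v \<and> A \<alpha> \<beta> p \<noteq> 0}" for \<beta> m
  proof (rule subsetI, elim CollectE exE conjE)
    fix \<alpha> p q assume "p + q = m" "mderiv v A \<alpha> \<beta> p \<noteq> 0"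
    then have "p + ev v + q = m + ev v" "A \<alpha> \<beta> (p + ev v) \<noteq> 0"
      by (auto simp: mderiv_def fderiv_def ac_simps)
    then show "\<alpha> \<in> {\<alpha>. \<exists>p q. p + q = m + ev v \<and> A \<alpha> \<beta> p \<noteq> 0}" by blast
  qed
  then show ?thesis using a unfolding clf_def by (meson finite_subset)
qed

lemma mderiv_madd: "mderiv v (madd A B) = madd (mderiv v A) (mderiv v B)"
  by (intro ext) (simp add: mderiv_def madd_def fderiv_def fadd_def distrib_left)

lemma mderiv_mneg: "mderiv v (mneg A) = mneg (mderiv v A)"
  by (intro ext) (simp add: mderiv_def mneg_def fderiv_def)

lemma mmul_mneg_left: "mmul (mneg A) B = mneg (mmul A B)"
  by (intro ext) (simp add: mmul_def mneg_def fmul_def sum_negf infsum_uminus)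

lemma mmul_mneg_right: "mmul A (mneg B) = mneg (mmul A B)"
  by (intro ext) (simp add: mmul_def mneg_def fmul_def sum_negf infsum_uminus)

lemma mi_le_len: "\<alpha> i \<le> mi_len (\<alpha>::('d::finite) mi)"
  unfolding mi_len_def by (rule member_le_sum) auto

lemma finite_len: "finite {\<alpha>::('d::finite) mi. mi_len \<alpha> \<le> n}"
proof -
  have "{\<alpha>::'d mi. mi_len \<alpha> \<le> n} \<subseteq> {f. \<forall>x. (x \<in> UNIV \<longrightarrow> f x \<in> {..n}) \<and> (x \<notin> UNIV \<longrightarrow> f x = 0)}"
    using mi_le_len order_trans by fastforce
  moreover have "finite {f::'d mi. \<forall>x. (x \<in> UNIV \<longrightarrow> f x \<in> {..n}) \<and> (x \<notin> UNIV \<longrightarrow> f x = 0)}"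
    by (rule finite_set_of_finite_funs) auto
  ultimately show ?thesis by (rule finite_subset)
qed

lemma mi_len_add [simp]: "mi_len (mi_add \<alpha> \<beta>) = mi_len \<alpha> + mi_len (\<beta>::('d::finite) mi)"
  by (simp add: mi_len_def mi_add_def sum.distrib)

lemma mi_len_e [simp]: "mi_len (mi_e a :: ('d::finite) mi) = 1"
  by (simp add: mi_len_def mi_e_def)

lemma mi_add_cancel: "mi_add \<alpha> \<gamma> = mi_add \<beta> \<gamma> \<longleftrightarrow> \<alpha> = \<beta>"
  by (auto simp: mi_add_def fun_eq_iff)

lemma mi_add_commute: "mi_add \<alpha> \<beta> = mi_add \<beta> \<alpha>"
  by (auto simp: mi_add_def fun_eq_iff)

lemma mi_add_assoc: "mi_add (mi_add \<alpha> \<beta>) \<gamma> = mi_add \<alpha> (mi_add \<beta> \<gamma>)"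
  by (auto simp: mi_add_def fun_eq_iff)

definition rb :: "('d::finite) fmat \<Rightarrow> nat \<Rightarrow> bool" where
  "rb A k \<longleftrightarrow> (\<forall>\<alpha> \<beta> p. A \<alpha> \<beta> p \<noteq> 0 \<longrightarrow> mi_len \<beta> \<le> mi_len \<alpha> + k)"

definition cb :: "('d::finite) fmat \<Rightarrow> nat \<Rightarrow> bool" where
  "cb A k \<longleftrightarrow> (\<forall>\<alpha> \<beta> p. A \<alpha> \<beta> p \<noteq> 0 \<longrightarrow> mi_len \<alpha> \<le> mi_len \<beta> + k)"

lemma rb_lrf: "rb A k \<Longrightarrow> lrf A"
  unfolding lrf_def
proof (intro allI)
  fix \<alpha> m assume "rb A k"
  then have "{\<beta>. \<exists>p q. p + q = m \<and> A \<alpha> \<beta> p \<noteq> 0} \<subseteq> {\<beta>. mi_len \<beta> \<le> mi_len \<alpha> + k}"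
    unfolding rb_def by blast
  then show "finite {\<beta>. \<exists>p q. p + q = m \<and> A \<alpha> \<beta> p \<noteq> 0}"
    by (rule finite_subset) (rule finite_len)
qed

lemma cb_clf: "cb A k \<Longrightarrow> clf A"
  unfolding clf_def
proof (intro allI)
  fix \<beta> m assume "cb A k"
  then have "{\<alpha>. \<exists>p q. p + q = m \<and> A \<alpha> \<beta> p \<noteq> 0} \<subseteq> {\<alpha>. mi_len \<alpha> \<le> mi_len \<beta> + k}"
    unfolding cb_def by blast
  then show "finite {\<alpha>. \<exists>p q. p + q = m \<and> A \<alpha> \<beta> p \<noteq> 0}"
    by (rule finite_subset) (rule finite_len)
qed

lemma rb_mmul: "rb A k \<Longrightarrow> rb B l \<Longrightarrow> rb (mmul A B) (k + l)"
  unfolding rb_def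
proof (intro allI impI)
  fix \<alpha> \<beta> p assume h: "\<forall>\<alpha> \<beta> p. A \<alpha> \<beta> p \<noteq> 0 \<longrightarrow> mi_len \<beta> \<le> mi_len \<alpha> + k"
    "\<forall>\<alpha> \<beta> p. B \<alpha> \<beta> p \<noteq> 0 \<longrightarrow> mi_len \<beta> \<le> mi_len \<alpha> + l" "mmul A B \<alpha> \<beta> p \<noteq> 0"
  from mmul_ne0[OF h(3)] obtain \<gamma> q r where "A \<alpha> \<gamma> q \<noteq> 0" "B \<gamma> \<beta> r \<noteq> 0" by blast
  then have "mi_len \<gamma> \<le> mi_len \<alpha> + k" "mi_len \<beta> \<le> mi_len \<gamma> + l" using h(1,2) by blast+
  then show "mi_len \<beta> \<le> mi_len \<alpha> + (k + l)" by linarith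
qed

lemma cb_mmul: "cb A k \<Longrightarrow> cb B l \<Longrightarrow> cb (mmul A B) (k + l)"
  unfolding cb_def
proof (intro allI impI)
  fix \<alpha> \<beta> p assume h: "\<forall>\<alpha> \<beta> p. A \<alpha> \<beta> p \<noteq> 0 \<longrightarrow> mi_len \<alpha> \<le> mi_len \<beta> + k"
    "\<forall>\<alpha> \<beta> p. B \<alpha> \<beta> p \<noteq> 0 \<longrightarrow> mi_len \<alpha> \<le> mi_len \<beta> + l" "mmul A B \<alpha> \<beta> p \<noteq> 0"
  from mmul_ne0[OF h(3)] obtain \<gamma> q r where "A \<alpha> \<gamma> q \<noteq> 0" "B \<gamma> \<beta> r \<noteq> 0" by blast
  then have "mi_len \<alpha> \<le> mi_len \<gamma> + k" "mi_len \<gamma> \<le> mi_len \<beta> + l" using h(1,2) by blast+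
  then show "mi_len \<alpha> \<le> mi_len \<beta> + (k + l)" by linarith
qed

lemma rb_madd: "rb A k \<Longrightarrow> rb B k \<Longrightarrow> rb (madd A B) k"
  unfolding rb_def madd_def fadd_def
proof (intro allI impI)
  fix \<alpha> \<beta> p assume h: "\<forall>\<alpha> \<beta> p. A \<alpha> \<beta> p \<noteq> 0 \<longrightarrow> mi_len \<beta> \<le> mi_len \<alpha> + k"
    "\<forall>\<alpha> \<beta> p. B \<alpha> \<beta> p \<noteq> 0 \<longrightarrow> mi_len \<beta> \<le> mi_len \<alpha> + k" "A \<alpha> \<beta> p + B \<alpha> \<beta> p \<noteq> 0"
  then have "A \<alpha> \<beta> p \<noteq> 0 \<or> B \<alpha> \<beta> p \<noteq> 0" by auto
  then show "mi_len \<beta> \<le> mi_len \<alpha> + k" using h(1,2) by blast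
qed

lemma rb_mneg: "rb A k \<Longrightarrow> rb (mneg A) k"
  unfolding rb_def mneg_def by simp

lemma rb_mderiv: "rb A k \<Longrightarrow> rb (mderiv v A) k"
  unfolding rb_def
proof (intro allI impI)
  fix \<alpha> \<beta> p assume h: "\<forall>\<alpha> \<beta> p. A \<alpha> \<beta> p \<noteq> 0 \<longrightarrow> mi_len \<beta> \<le> mi_len \<alpha> + k" "mderiv v A \<alpha> \<beta> p \<noteq> 0"
  then have "A \<alpha> \<beta> (p + ev v) \<noteq> 0" by (simp add: mderiv_def fderiv_def)
  then show "mi_len \<beta> \<le> mi_len \<alpha> + k" using h(1) by blast
qed

lemma rb_mono: "rb A k \<Longrightarrow> k \<le> l \<Longrightarrow> rb A l"
  unfolding rb_def by (meson add_le_mono le_refl order_trans)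

lemma Lam_LamPow: "Lam a = LamPow (mi_e a)"
  by (simp add: Lam_def LamPow_def)

lemma rb_LamPow: "rb (LamPow \<gamma>) (mi_len \<gamma>)"
  unfolding rb_def LamPow_def by (auto simp: fconst_def split: if_splits)

lemma cb_LamPow: "cb (LamPow \<gamma>) 0"
  unfolding cb_def LamPow_def by (auto simp: fconst_def split: if_splits)

lemma lrf_LamPow: "lrf (LamPow \<gamma>)"
  unfolding lrf_def
proof (intro allI)
  fix \<alpha> m
  have "{\<beta>. \<exists>p q. p + q = m \<and> LamPow \<gamma> \<alpha> \<beta> p \<noteq> 0} \<subseteq> {mi_add \<alpha> \<gamma>}"
    by (auto simp: LamPow_def fconst_def split: if_splits)
  then show "finite {\<beta>. \<exists>p q. p + q = m \<and> LamPow \<gamma> \<alpha> \<beta> p \<noteq> 0}"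
    by (rule finite_subset) simp
qed

lemma clf_LamPow: "clf (LamPow \<gamma>)"
  unfolding clf_def
proof (intro allI)
  fix \<beta> m
  have "{\<alpha>. \<exists>p q. p + q = m \<and> LamPow \<gamma> \<alpha> \<beta> p \<noteq> 0} \<subseteq> {\<alpha>. \<beta> = mi_add \<alpha> \<gamma>}"
    by (auto simp: LamPow_def fconst_def split: if_splits)
  also have "\<dots> \<subseteq> {\<alpha>. \<alpha> = (\<lambda>i. \<beta> i - \<gamma> i)}"
    by (auto simp: mi_add_def)
  finally show "finite {\<alpha>. \<exists>p q. p + q = m \<and> LamPow \<gamma> \<alpha> \<beta> p \<noteq> 0}"
    by (rule finite_subset) simp
qed

lemma LamPow_mmul: "mmul (LamPow \<gamma>) A \<alpha> \<beta> m = A (mi_add \<alpha> \<gamma>) \<beta> m"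
proof -
  have "mmul (LamPow \<gamma>) A \<alpha> \<beta> m = (\<Sum>\<delta>\<in>{mi_add \<alpha> \<gamma>}. fmul (LamPow \<gamma> \<alpha> \<delta>) (A \<delta> \<beta>) m)"
    by (rule mmul_sum) (auto simp: LamPow_def fconst_def split: if_splits)
  then show ?thesis by (simp add: LamPow_def fmul_fconst_left)
qed

lemma mmul_LamPow: "mmul A (LamPow \<gamma>) \<alpha> (mi_add \<delta> \<gamma>) m = A \<alpha> \<delta> m"
proof -
  have "mmul A (LamPow \<gamma>) \<alpha> (mi_add \<delta> \<gamma>) m = (\<Sum>\<delta>'\<in>{\<delta>}. fmul (A \<alpha> \<delta>') (LamPow \<gamma> \<delta>' (mi_add \<delta> \<gamma>)) m)"
    by (rule mmul_sum) (auto simp: LamPow_def fconst_def mi_add_cancel split: if_splits)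
  then show ?thesis by (simp add: LamPow_def fmul_fconst_right)
qed

lemma mmul_LamPow0:
  assumes "\<And>\<delta>. \<beta> \<noteq> mi_add \<delta> \<gamma>"
  shows "mmul A (LamPow \<gamma>) \<alpha> \<beta> m = 0"
proof -
  have "mmul A (LamPow \<gamma>) \<alpha> \<beta> m = (\<Sum>\<delta>'\<in>{}. fmul (A \<alpha> \<delta>') (LamPow \<gamma> \<delta>' \<beta>) m)"
    by (rule mmul_sum) (use assms in \<open>auto simp: LamPow_def fconst_def split: if_splits\<close>)
  then show ?thesis by simp
qed

lemma LamPow_LamPow: "mmul (LamPow g) (LamPow h) = LamPow (mi_add g h)"
proof (intro ext)
  fix \<alpha> \<beta> m
  show "mmul (LamPow g) (LamPow h) \<alpha> \<beta> m = LamPow (mi_add g h) \<alpha> \<beta> m"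
    unfolding LamPow_mmul by (simp add: LamPow_def mi_add_assoc)
qed

lemma mderiv_LamPow: "mderiv v (LamPow g) = mzero"
  by (intro ext) (simp add: mderiv_def LamPow_def mzero_def)

lemma madd_mzero: "madd A mzero = A"
  by (intro ext) (simp add: madd_def mzero_def fadd_def)

lemma madd_mzero_left: "madd mzero A = A"
  by (intro ext) (simp add: madd_def mzero_def fadd_def)

subsection \<open>Inverse of block lower unitriangular matrices\<close>

function binv :: "('d::finite) fmat \<Rightarrow> 'd mi \<Rightarrow> 'd mi \<Rightarrow> 'd fps" where
  "binv S \<alpha> \<beta> = (if mi_len \<alpha> < mi_len \<beta> then fconst 0
     else if mi_len \<alpha> = mi_len \<beta> then fconst (if \<alpha> = \<beta> then 1 else 0)
     else (\<lambda>m. - (\<Sum>\<gamma>\<in>{\<gamma>. mi_len \<beta> \<le> mi_len \<gamma> \<and> mi_len \<gamma> < mi_len \<alpha>}. fmul (S \<alpha> \<gamma>) (binv S \<gamma> \<beta>) m)))"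
  by pat_completeness auto
termination by (relation "Wellfounded.measure (\<lambda>(S, \<alpha>, \<beta>). mi_len \<alpha>)") auto

declare binv.simps [simp del]

lemma blu_rb: "block_lower_unitriangular S \<Longrightarrow> rb S 0"
  unfolding block_lower_unitriangular_def rb_def
  by (metis add.right_neutral fconst0 not_le_imp_less)

lemma blu_binv: "block_lower_unitriangular (binv S)"
  unfolding block_lower_unitriangular_def by (auto simp: binv.simps)

lemma blu_lrf: "block_lower_unitriangular S \<Longrightarrow> lrf S"
  using blu_rb rb_lrf by blast

lemma blu_binv_right:
  fixes S :: "('d::finite) fmat"
  assumes S: "block_lower_unitriangular S"
  shows "mmul S (binv S) = mone"
proof (intro ext)
  fix \<alpha> \<beta> :: "'d mi" and m
  let ?B = "binv S"
  define F where "F = {\<gamma>::'d mi. mi_len \<beta> \<le> mi_len \<gamma> \<and> mi_len \<gamma> \<le> mi_len \<alpha>}"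
  have fF: "finite F" unfolding F_def by (rule finite_subset[OF _ finite_len[of "mi_len \<alpha>"]]) auto
  have Sz: "S \<alpha> \<gamma> p = 0" if "mi_len \<alpha> < mi_len \<gamma>" for \<gamma> p
    using S that unfolding block_lower_unitriangular_def by simp
  have Bz: "?B \<gamma> \<beta> p = 0" if "mi_len \<gamma> < mi_len \<beta>" for \<gamma> p
    using that by (simp add: binv.simps)
  have e: "mmul S ?B \<alpha> \<beta> m = (\<Sum>\<gamma>\<in>F. fmul (S \<alpha> \<gamma>) (?B \<gamma> \<beta>) m)"
  proof (rule mmul_sum[OF fF])
    fix \<gamma> p q assume "S \<alpha> \<gamma> p \<noteq> 0" "?B \<gamma> \<beta> q \<noteq> 0"
    then have "\<not> mi_len \<alpha> < mi_len \<gamma>" "\<not> mi_len \<gamma> < mi_len \<beta>" using Sz Bz by blast+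
    then show "\<gamma> \<in> F" unfolding F_def by simp
  qed
  show "mmul S ?B \<alpha> \<beta> m = mone \<alpha> \<beta> m"
  proof (cases "mi_len \<alpha> < mi_len \<beta>")
    case True
    then have "F = {}" unfolding F_def by auto
    then show ?thesis using e True by (auto simp: mone_def fconst_def)
  next
    case False
    define F1 where "F1 = {\<gamma>::'d mi. mi_len \<beta> \<le> mi_len \<gamma> \<and> mi_len \<gamma> < mi_len \<alpha>}"
    have F: "F = insert \<alpha> (F1 \<union> {\<gamma>::'d mi. mi_len \<gamma> = mi_len \<alpha> \<and> \<gamma> \<noteq> \<alpha>})"
      using False unfolding F_def F1_def by auto
    have fF1: "finite F1" using fF unfolding F_def F1_def by (rule rev_finite_subset) auto
    have fF2: "finite {\<gamma>::'d mi. mi_len \<gamma> = mi_len \<alpha> \<and> \<gamma> \<noteq> \<alpha>}"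
      by (rule finite_subset[OF _ finite_len[of "mi_len \<alpha>"]]) auto
    have Sd: "S \<alpha> \<gamma> = fconst (if \<alpha> = \<gamma> then 1 else 0)" if "mi_len \<gamma> = mi_len \<alpha>" for \<gamma>
      using S that unfolding block_lower_unitriangular_def by simp
    have z2: "(\<Sum>\<gamma>\<in>{\<gamma>::'d mi. mi_len \<gamma> = mi_len \<alpha> \<and> \<gamma> \<noteq> \<alpha>}. fmul (S \<alpha> \<gamma>) (?B \<gamma> \<beta>) m) = 0"
      by (rule sum.neutral) (auto simp: Sd fmul_fconst_left)
    have "mmul S ?B \<alpha> \<beta> m = fmul (S \<alpha> \<alpha>) (?B \<alpha> \<beta>) m
        + (\<Sum>\<gamma>\<in>F1 \<union> {\<gamma>::'d mi. mi_len \<gamma> = mi_len \<alpha> \<and> \<gamma> \<noteq> \<alpha>}. fmul (S \<alpha> \<gamma>) (?B \<gamma> \<beta>) m)"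
      unfolding e F using fF1 fF2 by (subst sum.insert) (auto simp: F1_def)
    also have "\<dots> = ?B \<alpha> \<beta> m + (\<Sum>\<gamma>\<in>F1. fmul (S \<alpha> \<gamma>) (?B \<gamma> \<beta>) m)"
      using fF1 fF2 z2 by (subst sum.union_disjoint) (auto simp: F1_def Sd fmul_fconst_left)
    also have "\<dots> = mone \<alpha> \<beta> m"
    proof (cases "mi_len \<alpha> = mi_len \<beta>")
      case True
      then have "F1 = {}" unfolding F1_def by auto
      then show ?thesis using True by (simp add: binv.simps mone_def)
    next
      case False': False
      then show ?thesis using False
        by (subst binv.simps) (auto simp: F1_def mone_def fconst_def)
    qed
    finally show ?thesis .
  qed
qed

lemma blu_inv:
  fixes S :: "('d::finite) fmat"
  assumes S: "block_lower_unitriangular S"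
  shows "mmul S (minv S) = mone" "mmul (minv S) S = mone" "block_lower_unitriangular (minv S)"
proof -
  let ?B = "binv S"
  let ?C = "binv ?B"
  have SB: "mmul S ?B = mone" by (rule blu_binv_right[OF S])
  have BC: "mmul ?B ?C = mone" by (rule blu_binv_right[OF blu_binv])
  have lS: "lrf S" and lB: "lrf ?B" using S blu_binv blu_lrf by blast+
  have "S = mmul (mmul S ?B) ?C" using BC assoc_ll[OF lS lB, of ?C] by (simp add: mmul_mone_right)
  then have "S = ?C" using SB by (simp add: mmul_mone_left)
  then have BS: "mmul ?B S = mone" using BC by simp
  have uniq: "B' = ?B" if "mmul S B' = mone \<and> mmul B' S = mone" for B'
  proof -
    have "B' = mmul (mmul ?B S) B'" using BS by (simp add: mmul_mone_left)
    also have "\<dots> = mmul ?B (mmul S B')" by (rule assoc_ll[OF lB lS])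
    also have "\<dots> = ?B" using that by (simp add: mmul_mone_right)
    finally show ?thesis .
  qed
  have "minv S = ?B"
    unfolding minv_def
  proof (rule the_equality)
    show "mmul S ?B = mone \<and> mmul ?B S = mone" using SB BS by simp
  qed (rule uniq)
  then show "mmul S (minv S) = mone" "mmul (minv S) S = mone" "block_lower_unitriangular (minv S)"
    using SB BS blu_binv by simp_all
qed

definition wsum :: "('a \<Rightarrow> nat) \<Rightarrow> ('a \<Rightarrow>\<^sub>0 nat) \<Rightarrow> nat" where
  "wsum w m = (\<Sum>v\<in>Poly_Mapping.keys m. Poly_Mapping.lookup m v * w v)"

lemma wsum_superset:
  assumes "finite K" "Poly_Mapping.keys m \<subseteq> K"
  shows "wsum w m = (\<Sum>v\<in>K. Poly_Mapping.lookup m v * w v)"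
  unfolding wsum_def
  by (rule sum.mono_neutral_left) (use assms in \<open>auto simp: in_keys_iff\<close>)

lemma wsum_add: "wsum w (p + q) = wsum w p + wsum w q"
proof -
  let ?K = "Poly_Mapping.keys p \<union> Poly_Mapping.keys q"
  have f: "finite ?K" by simp
  have "wsum w (p + q) = (\<Sum>v\<in>?K. Poly_Mapping.lookup (p + q) v * w v)"
    by (rule wsum_superset[OF f keys_add])
  also have "\<dots> = (\<Sum>v\<in>?K. Poly_Mapping.lookup p v * w v) + (\<Sum>v\<in>?K. Poly_Mapping.lookup q v * w v)"
    by (simp add: lookup_add distrib_right sum.distrib)
  also have "\<dots> = wsum w p + wsum w q"
    by (simp add: wsum_superset[OF f])
  finally show ?thesis .
qed

lemma wsum_ev: "wsum w (ev v) = w v"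
  by (simp add: wsum_def)

lemma wsum_ev' [simp]: "wsum w (Poly_Mapping.single v (Suc 0)) = w v"
  by (simp add: wsum_def)

lemma wsum_0 [simp]: "wsum w 0 = 0"
  by (simp add: wsum_def)

lemma wsum_le: "p + q = m \<Longrightarrow> wsum w p \<le> wsum w m"
  using wsum_add[of w p q] by simp

definition twl :: "('d::finite) tvar \<Rightarrow> nat" where
  "twl v = (case v of T1 \<gamma> \<Rightarrow> mi_len \<gamma> | T2 \<gamma> \<Rightarrow> mi_len \<gamma>)"

abbreviation (input) "deg \<equiv> wsum (\<lambda>_. 1)"

lemma deg_pos:
  assumes "v \<in> Poly_Mapping.keys m"
  shows "deg m \<noteq> 0"
proof -
  have "Poly_Mapping.lookup m v * 1 \<le> deg m"
    unfolding wsum_def by (rule member_le_sum) (use assms in auto)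
  then show ?thesis using assms by (simp add: in_keys_iff)
qed

subsection \<open>The generator of the vacuum wave matrix\<close>

definition gen :: "('d mi \<Rightarrow> 'd tvar) \<Rightarrow> 'd fmat" where
  "gen tc = (\<lambda>\<alpha> \<beta> m. infsum (\<lambda>\<gamma>. fmul (fvar (tc \<gamma>)) (LamPow \<gamma> \<alpha> \<beta>) m) UNIV)"

lemma W0_gen: "W0 tc = mexp (gen tc)"
  by (simp add: W0_def gen_def)

lemma gen_cases:
  "gen tc \<alpha> \<beta> m = (if \<exists>\<gamma>. \<beta> = mi_add \<alpha> \<gamma> then fvar (tc (THE \<gamma>. \<beta> = mi_add \<alpha> \<gamma>)) m else 0)"
proof (cases "\<exists>\<gamma>. \<beta> = mi_add \<alpha> \<gamma>")
  case True
  then obtain \<gamma> where g: "\<beta> = mi_add \<alpha> \<gamma>" by blast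
  have u: "\<gamma>' = \<gamma>" if "\<beta> = mi_add \<alpha> \<gamma>'" for \<gamma>'
    using that g by (auto simp: mi_add_def fun_eq_iff)
  then have th: "(THE \<gamma>. \<beta> = mi_add \<alpha> \<gamma>) = \<gamma>" using g by blast
  have "gen tc \<alpha> \<beta> m = infsum (\<lambda>\<gamma>'. fmul (fvar (tc \<gamma>')) (LamPow \<gamma>' \<alpha> \<beta>) m) {\<gamma>}"
    unfolding gen_def
    by (rule infsum_cong_neutral) (auto simp: LamPow_def fmul_fconst_right u)
  then have "gen tc \<alpha> \<beta> m = fvar (tc \<gamma>) m" using g by (simp add: LamPow_def fmul_fconst_right)
  then show ?thesis using True th by simp
next
  case False
  have "gen tc \<alpha> \<beta> m = infsum (\<lambda>\<gamma>'. fmul (fvar (tc \<gamma>')) (LamPow \<gamma>' \<alpha> \<beta>) m) {}"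
    unfolding gen_def
    by (rule infsum_cong_neutral) (use False in \<open>auto simp: LamPow_def fmul_fconst_right\<close>)
  then show ?thesis using False by simp
qed

lemma gen_at: "gen tc \<alpha> (mi_add \<alpha> \<gamma>) m = fvar (tc \<gamma>) m"
proof -
  have "(THE \<gamma>'. mi_add \<alpha> \<gamma> = mi_add \<alpha> \<gamma>') = \<gamma>"
    by (rule the_equality) (auto simp: mi_add_def fun_eq_iff)
  moreover have "\<exists>\<gamma>'. mi_add \<alpha> \<gamma> = mi_add \<alpha> \<gamma>'" by blast
  ultimately show ?thesis by (simp add: gen_cases)
qed

lemma gen_nz:
  assumes "gen tc \<alpha> \<beta> m \<noteq> 0"
  shows "\<exists>\<gamma>. \<beta> = mi_add \<alpha> \<gamma> \<and> m = ev (tc \<gamma>)"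
proof -
  have "\<exists>\<gamma>. \<beta> = mi_add \<alpha> \<gamma>"
  proof (rule ccontr)
    assume "\<not> (\<exists>\<gamma>. \<beta> = mi_add \<alpha> \<gamma>)"
    then show False using assms by (simp add: gen_cases)
  qed
  then obtain \<gamma> where g: "\<beta> = mi_add \<alpha> \<gamma>" by blast
  then have "fvar (tc \<gamma>) m \<noteq> 0" using assms gen_at by metis
  then have "m = ev (tc \<gamma>)" by (simp add: fvar_def split: if_splits)
  then show ?thesis using g by blast
qed

lemma tl_T1 [simp]: "twl (T1 \<gamma>) = mi_len \<gamma>" and tl_T2 [simp]: "twl (T2 \<gamma>) = mi_len \<gamma>"
  by (simp_all add: twl_def)

lemma mpow_prop:
  fixes tc :: "('d::finite) mi \<Rightarrow> 'd tvar"
  assumes twl: "\<And>\<gamma>. twl (tc \<gamma>) = mi_len \<gamma>"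
  shows "mpow (gen tc) n \<alpha> \<beta> m \<noteq> 0 \<Longrightarrow>
     deg m = n \<and> mi_len \<beta> = mi_len \<alpha> + wsum twl m \<and> Poly_Mapping.keys m \<subseteq> range tc"
proof (induction n arbitrary: \<alpha> \<beta> m)
  case 0
  then have "m = 0" "\<alpha> = \<beta>" by (auto simp: mone_def fconst_def split: if_splits)
  then show ?case by simp
next
  case (Suc n)
  from mmul_ne0[OF Suc.prems[simplified]] obtain \<gamma> p q where
    h: "p + q = m" "gen tc \<alpha> \<gamma> p \<noteq> 0" "mpow (gen tc) n \<gamma> \<beta> q \<noteq> 0" by blast
  from gen_nz[OF h(2)] obtain \<gamma>' where g: "\<gamma> = mi_add \<alpha> \<gamma>'" "p = ev (tc \<gamma>')" by blast
  from Suc.IH[OF h(3)] have ih: "deg q = n" "mi_len \<beta> = mi_len \<gamma> + wsum twl q"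
    "Poly_Mapping.keys q \<subseteq> range tc" by auto
  have m: "m = p + q" using h(1) by simp
  have "deg m = Suc n" using ih(1) g(2) unfolding m wsum_add by simp
  moreover have "mi_len \<beta> = mi_len \<alpha> + wsum twl m"
    using g ih(2) twl[of \<gamma>'] unfolding m wsum_add by simp
  moreover have "Poly_Mapping.keys m \<subseteq> range tc"
    using keys_add[of p q] h(1) g(2) ih(3) by auto
  ultimately show ?case by blast
qed

lemma lrf_wl:
  fixes X :: "('d::finite) fmat"
  assumes "\<And>\<alpha> \<beta> m. X \<alpha> \<beta> m \<noteq> 0 \<Longrightarrow> mi_len \<beta> \<le> mi_len \<alpha> + wsum twl m"
  shows "lrf X"
  unfolding lrf_def
proof (intro allI)
  fix \<alpha> m
  have "{\<beta>. \<exists>p q. p + q = m \<and> X \<alpha> \<beta> p \<noteq> 0} \<subseteq> {\<beta>. mi_len \<beta> \<le> mi_len \<alpha> + wsum twl m}"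
  proof (rule subsetI, elim CollectE exE conjE)
    fix \<beta> p q assume "p + q = m" "X \<alpha> \<beta> p \<noteq> 0"
    then have "mi_len \<beta> \<le> mi_len \<alpha> + wsum twl p" "wsum twl p \<le> wsum twl m"
      using assms wsum_le by blast+
    then show "\<beta> \<in> {\<beta>. mi_len \<beta> \<le> mi_len \<alpha> + wsum twl m}" by simp
  qed
  then show "finite {\<beta>. \<exists>p q. p + q = m \<and> X \<alpha> \<beta> p \<noteq> 0}"
    by (rule finite_subset) (rule finite_len)
qed

lemma lrf_mpow:
  fixes tc :: "('d::finite) mi \<Rightarrow> 'd tvar"
  assumes twl: "\<And>\<gamma>. twl (tc \<gamma>) = mi_len \<gamma>"
  shows "lrf (mpow (gen tc) n)"
  by (rule lrf_wl) (use mpow_prop[OF twl] in fastforce)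

lemma lrf_gen:
  fixes tc :: "('d::finite) mi \<Rightarrow> 'd tvar"
  assumes twl: "\<And>\<gamma>. twl (tc \<gamma>) = mi_len \<gamma>"
  shows "lrf (gen tc)"
proof (rule lrf_wl)
  fix \<alpha> \<beta> m assume "gen tc \<alpha> \<beta> m \<noteq> 0"
  from gen_nz[OF this] obtain \<gamma> where "\<beta> = mi_add \<alpha> \<gamma>" "m = ev (tc \<gamma>)" by blast
  then show "mi_len \<beta> \<le> mi_len \<alpha> + wsum twl m" using twl[of \<gamma>] by (simp add: wsum_ev)
qed

lemma mexp_gen:
  fixes tc :: "('d::finite) mi \<Rightarrow> 'd tvar"
  assumes twl: "\<And>\<gamma>. twl (tc \<gamma>) = mi_len \<gamma>"
  shows "mexp (gen tc) \<alpha> \<beta> m = mpow (gen tc) (deg m) \<alpha> \<beta> m / fact (deg m)"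
proof -
  have "mexp (gen tc) \<alpha> \<beta> m = infsum (\<lambda>n. mpow (gen tc) n \<alpha> \<beta> m / fact n) {deg m}"
    unfolding mexp_def
    by (rule infsum_cong_neutral) (use mpow_prop[OF twl] in force)+
  then show ?thesis by simp
qed

definition msc :: "complex \<Rightarrow> 'd fmat \<Rightarrow> 'd fmat" where
  "msc c A = (\<lambda>\<alpha> \<beta> m. c * A \<alpha> \<beta> m)"

lemma mmul_msc_right: "mmul A (msc c X) = msc c (mmul A X)"
  by (intro ext) (simp add: mmul_def msc_def fmul_def sum_distrib_left ac_simps infsum_cmult_right'[symmetric])

lemma mmul_msc_left: "mmul (msc c X) B = msc c (mmul X B)"
  by (intro ext) (simp add: mmul_def msc_def fmul_def sum_distrib_left ac_simps infsum_cmult_right'[symmetric])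

lemma ev_sum_ev: "m + ev v = ev w \<Longrightarrow> m = 0 \<and> v = w"
proof -
  assume h: "m + ev v = ev w"
  have l: "Poly_Mapping.lookup m k + Poly_Mapping.lookup (ev v) k = Poly_Mapping.lookup (ev w) k" for k
    using arg_cong[OF h, of "\<lambda>x. Poly_Mapping.lookup x k"] by (simp add: lookup_add)
  have "v = w"
  proof (rule ccontr)
    assume "v \<noteq> w"
    then show False using l[of v] by (simp add: lookup_single)
  qed
  moreover have "m = 0"
  proof (rule poly_mapping_eqI)
    fix k show "Poly_Mapping.lookup m k = Poly_Mapping.lookup 0 k"
      using l[of k] \<open>v = w\<close> by (cases "k = w") (simp_all add: lookup_single)
  qed
  ultimately show ?thesis by simp
qed

lemma mderiv_mone: "mderiv v mone = mzero"
  by (intro ext) (simp add: mderiv_def mone_def mzero_def)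

lemma gen_zero: "\<not> (\<exists>\<gamma>. \<beta> = mi_add \<alpha> \<gamma> \<and> m = ev (tc \<gamma>)) \<Longrightarrow> gen tc \<alpha> \<beta> m = 0"
  using gen_nz by blast

lemma mderiv_gen:
  assumes inj: "inj tc"
  shows "mderiv (tc g) (gen tc) = LamPow g"
proof (intro ext)
  fix \<alpha> \<beta> m
  show "mderiv (tc g) (gen tc) \<alpha> \<beta> m = LamPow g \<alpha> \<beta> m"
  proof (cases "\<beta> = mi_add \<alpha> g \<and> m = 0")
    case True
    then show ?thesis by (simp add: mderiv_def fderiv_def gen_at fvar_def LamPow_def fconst_def)
  next
    case False
    have "gen tc \<alpha> \<beta> (m + ev (tc g)) = 0"
    proof (rule gen_zero, rule notI, elim exE conjE)
      fix \<gamma> assume "\<beta> = mi_add \<alpha> \<gamma>" "m + ev (tc g) = ev (tc \<gamma>)"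
      then show False using False ev_sum_ev inj by (metis injD)
    qed
    then show ?thesis using False by (auto simp: mderiv_def fderiv_def LamPow_def fconst_def)
  qed
qed

lemma gen_comm: "mmul (gen tc) (LamPow g) = mmul (LamPow g) (gen tc)"
proof (intro ext)
  fix \<alpha> \<beta> m
  show "mmul (gen tc) (LamPow g) \<alpha> \<beta> m = mmul (LamPow g) (gen tc) \<alpha> \<beta> m"
    unfolding LamPow_mmul
  proof (cases "\<exists>\<delta>. \<beta> = mi_add \<delta> g")
    case True
    then obtain \<delta> where d: "\<beta> = mi_add \<delta> g" by blast
    show "mmul (gen tc) (LamPow g) \<alpha> \<beta> m = gen tc (mi_add \<alpha> g) \<beta> m"
    proof (cases "\<exists>\<gamma>. \<delta> = mi_add \<alpha> \<gamma>")
      case True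
      then obtain \<gamma> where "\<delta> = mi_add \<alpha> \<gamma>" by blast
      then have "\<beta> = mi_add (mi_add \<alpha> g) \<gamma>" using d by (metis mi_add_assoc mi_add_commute)
      moreover have "mmul (gen tc) (LamPow g) \<alpha> \<beta> m = gen tc \<alpha> \<delta> m" using d mmul_LamPow by simp
      ultimately show ?thesis using \<open>\<delta> = _\<close> by (simp add: gen_at)
    next
      case False
      have "gen tc (mi_add \<alpha> g) \<beta> m = 0"
      proof (rule gen_zero, rule notI, elim exE conjE)
        fix \<gamma> assume "\<beta> = mi_add (mi_add \<alpha> g) \<gamma>"
        then have "\<delta> = mi_add \<alpha> \<gamma>" using d by (metis mi_add_assoc mi_add_cancel mi_add_commute)
        then show False using False by blast
      qed
      moreover have "gen tc \<alpha> \<delta> m = 0" using False gen_zero by blast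
      ultimately show ?thesis using d by (simp add: mmul_LamPow)
    qed
  next
    case False
    have "gen tc (mi_add \<alpha> g) \<beta> m = 0"
    proof (rule gen_zero, rule notI, elim exE conjE)
      fix \<gamma> assume "\<beta> = mi_add (mi_add \<alpha> g) \<gamma>"
      then have "\<beta> = mi_add (mi_add \<alpha> \<gamma>) g" by (metis mi_add_assoc mi_add_commute)
      then show False using False by blast
    qed
    then show "mmul (gen tc) (LamPow g) \<alpha> \<beta> m = gen tc (mi_add \<alpha> g) \<beta> m"
      using False mmul_LamPow0 by metis
  qed
qed

lemma mpow_comm:
  fixes tc :: "('d::finite) mi \<Rightarrow> 'd tvar"
  assumes twl: "\<And>\<gamma>. twl (tc \<gamma>) = mi_len \<gamma>"
  shows "mmul (mpow (gen tc) n) (LamPow g) = mmul (LamPow g) (mpow (gen tc) n)"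
proof (induction n)
  case 0
  then show ?case by (simp add: mmul_mone_left mmul_mone_right)
next
  case (Suc n)
  let ?A = "gen tc" and ?X = "mpow (gen tc) n" and ?L = "LamPow g"
  have lA: "lrf ?A" by (rule lrf_gen[OF twl])
  have lX: "lrf ?X" by (rule lrf_mpow[OF twl])
  have "mmul (mpow ?A (Suc n)) ?L = mmul ?A (mmul ?X ?L)"
    using assoc_ll[OF lA lX] by simp
  also have "\<dots> = mmul ?A (mmul ?L ?X)" using Suc by simp
  also have "\<dots> = mmul (mmul ?A ?L) ?X" using assoc_ll[OF lA lrf_LamPow] by simp
  also have "\<dots> = mmul (mmul ?L ?A) ?X" by (simp add: gen_comm)
  also have "\<dots> = mmul ?L (mpow ?A (Suc n))" using assoc_ll[OF lrf_LamPow lA] by simp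
  finally show ?case .
qed

lemma mderiv_mpow:
  fixes tc :: "('d::finite) mi \<Rightarrow> 'd tvar"
  assumes twl: "\<And>\<gamma>. twl (tc \<gamma>) = mi_len \<gamma>" and inj: "inj tc"
  shows "mderiv (tc g) (mpow (gen tc) (Suc n)) = msc (of_nat (Suc n)) (mmul (LamPow g) (mpow (gen tc) n))"
proof (induction n)
  case 0
  have lA: "lrf (gen tc)" by (rule lrf_gen[OF twl])
  have "mderiv (tc g) (mpow (gen tc) (Suc 0)) = madd (mmul (LamPow g) mone) (mmul (gen tc) mzero)"
    using mderiv_mmul[OF lrf_pf[OF lA], of "tc g" mone] by (simp add: mderiv_gen[OF inj] mderiv_mone)
  then show ?case by (simp add: mmul_mzero_right madd_mzero msc_def)
next
  case (Suc n)
  let ?A = "gen tc" and ?X = "mpow (gen tc) (Suc n)" and ?Y = "mpow (gen tc) n" and ?L = "LamPow g"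
  have lA: "lrf ?A" by (rule lrf_gen[OF twl])
  have lY: "lrf ?Y" by (rule lrf_mpow[OF twl])
  have "mderiv (tc g) (mpow ?A (Suc (Suc n))) = madd (mmul ?L ?X) (mmul ?A (mderiv (tc g) ?X))"
    using mderiv_mmul[OF lrf_pf[OF lA], of "tc g" ?X] by (simp add: mderiv_gen[OF inj])
  also have "mmul ?A (mderiv (tc g) ?X) = msc (of_nat (Suc n)) (mmul ?L ?X)"
  proof -
    have "mmul ?A (mderiv (tc g) ?X) = msc (of_nat (Suc n)) (mmul ?A (mmul ?L ?Y))"
      using Suc by (simp add: mmul_msc_right)
    also have "mmul ?A (mmul ?L ?Y) = mmul (mmul ?A ?L) ?Y" using assoc_ll[OF lA lrf_LamPow] by simp
    also have "\<dots> = mmul (mmul ?L ?A) ?Y" by (simp add: gen_comm)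
    also have "\<dots> = mmul ?L ?X" using assoc_ll[OF lrf_LamPow lA] by simp
    finally show ?thesis .
  qed
  finally show ?case by (intro ext) (simp add: madd_def fadd_def msc_def algebra_simps)
qed

subsection \<open>Vacuum wave matrices\<close>

lemma mmul_LamPow_scalar:
  assumes "\<And>\<alpha> \<beta>. X \<alpha> \<beta> m = c * Y \<alpha> \<beta> m"
  shows "mmul X (LamPow g) \<alpha> \<beta> m = c * mmul Y (LamPow g) \<alpha> \<beta> m"
proof (cases "\<exists>\<delta>. \<beta> = mi_add \<delta> g")
  case True
  then obtain \<delta> where "\<beta> = mi_add \<delta> g" by blast
  then show ?thesis using assms by (simp add: mmul_LamPow)
next
  case False
  then show ?thesis using mmul_LamPow0 by (metis mult_zero_right)
qed

definition Wn :: "('d mi \<Rightarrow> 'd tvar) \<Rightarrow> 'd fmat" where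
  "Wn tc = (\<lambda>\<alpha> \<beta> m. (-1) ^ deg m * W0 tc \<alpha> \<beta> m)"

context
  fixes tc :: "('d::finite) mi \<Rightarrow> 'd tvar"
  assumes twl: "\<And>\<gamma>. twl (tc \<gamma>) = mi_len \<gamma>" and inj: "inj tc"
begin

lemma W_entry: "W0 tc \<alpha> \<beta> m = mpow (gen tc) (deg m) \<alpha> \<beta> m / fact (deg m)"
  by (simp add: W0_gen mexp_gen[OF twl])

lemma W_prop: "W0 tc \<alpha> \<beta> m \<noteq> 0 \<Longrightarrow> mi_len \<beta> = mi_len \<alpha> + wsum twl m \<and> Poly_Mapping.keys m \<subseteq> range tc"
  using mpow_prop[OF twl] by (simp add: W_entry)

lemma lrf_W: "lrf (W0 tc)"
  by (rule lrf_wl) (use W_prop in simp)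

lemma lrf_Wn: "lrf (Wn tc)"
  by (rule lrf_wl) (use W_prop in \<open>simp add: Wn_def\<close>)

lemma W_zero: "W0 tc \<alpha> \<beta> 0 = (if \<alpha> = \<beta> then 1 else 0)"
  by (simp add: W_entry mone_def fconst_def)

lemma Wn_zero: "Wn tc \<alpha> \<beta> 0 = (if \<alpha> = \<beta> then 1 else 0)"
  by (simp add: Wn_def W_zero)

lemma deg_ev: "deg (m + ev v) = Suc (deg m)"
  by (simp add: wsum_add wsum_ev)

lemma mderiv_W: "mderiv (tc g) (W0 tc) = mmul (LamPow g) (W0 tc)"
proof (intro ext)
  fix \<alpha> \<beta> :: "'d mi" and m :: "'d tvar \<Rightarrow>\<^sub>0 nat"
  let ?d = "deg m" and ?v = "tc g"
  have "mderiv ?v (mpow (gen tc) (Suc ?d)) \<alpha> \<beta> m = of_nat (Suc ?d) * mpow (gen tc) ?d (mi_add \<alpha> g) \<beta> m"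
    unfolding mderiv_mpow[OF twl inj] by (simp add: msc_def LamPow_mmul)
  then have e: "of_nat (Poly_Mapping.lookup m ?v + 1) * mpow (gen tc) (Suc ?d) \<alpha> \<beta> (m + ev ?v)
     = of_nat (Suc ?d) * mpow (gen tc) ?d (mi_add \<alpha> g) \<beta> m"
    by (simp add: mderiv_def fderiv_def)
  have "mderiv ?v (W0 tc) \<alpha> \<beta> m = of_nat (Poly_Mapping.lookup m ?v + 1) * mpow (gen tc) (Suc ?d) \<alpha> \<beta> (m + ev ?v) / fact (Suc ?d)"
    unfolding mderiv_def fderiv_def W_entry[of _ _ "m + ev ?v"] deg_ev by simp
  also have "\<dots> = mpow (gen tc) ?d (mi_add \<alpha> g) \<beta> m / fact ?d"
  proof -
    have nz: "(of_nat (Suc ?d) :: complex) \<noteq> 0" by (simp only: of_nat_eq_0_iff)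
    have "(of_nat (Suc ?d) :: complex) * mpow (gen tc) ?d (mi_add \<alpha> g) \<beta> m / fact (Suc ?d)
        = of_nat (Suc ?d) * mpow (gen tc) ?d (mi_add \<alpha> g) \<beta> m / (of_nat (Suc ?d) * fact ?d)"
      by (simp only: fact_Suc of_nat_mult)
    also have "\<dots> = mpow (gen tc) ?d (mi_add \<alpha> g) \<beta> m / fact ?d"
      using nz by simp
    finally show ?thesis unfolding e .
  qed
  also have "\<dots> = mmul (LamPow g) (W0 tc) \<alpha> \<beta> m"
    by (simp add: LamPow_mmul W_entry)
  finally show "mderiv ?v (W0 tc) \<alpha> \<beta> m = mmul (LamPow g) (W0 tc) \<alpha> \<beta> m" .
qed

lemma W_comm: "mmul (W0 tc) (LamPow g) = mmul (LamPow g) (W0 tc)"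
proof (intro ext)
  fix \<alpha> \<beta> :: "'d mi" and m :: "'d tvar \<Rightarrow>\<^sub>0 nat"
  let ?d = "deg m"
  have "mmul (W0 tc) (LamPow g) \<alpha> \<beta> m = (1 / fact ?d) * mmul (mpow (gen tc) ?d) (LamPow g) \<alpha> \<beta> m"
    by (rule mmul_LamPow_scalar) (simp add: W_entry)
  also have "\<dots> = (1 / fact ?d) * mpow (gen tc) ?d (mi_add \<alpha> g) \<beta> m"
    by (simp add: mpow_comm[OF twl] LamPow_mmul)
  also have "\<dots> = mmul (LamPow g) (W0 tc) \<alpha> \<beta> m"
    by (simp add: LamPow_mmul W_entry)
  finally show "mmul (W0 tc) (LamPow g) \<alpha> \<beta> m = mmul (LamPow g) (W0 tc) \<alpha> \<beta> m" .
qed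

lemma mderiv_Wn: "mderiv (tc g) (Wn tc) = mneg (mmul (LamPow g) (Wn tc))"
proof (intro ext)
  fix \<alpha> \<beta> :: "'d mi" and m :: "'d tvar \<Rightarrow>\<^sub>0 nat"
  have "mderiv (tc g) (Wn tc) \<alpha> \<beta> m = - ((-1) ^ deg m * mderiv (tc g) (W0 tc) \<alpha> \<beta> m)"
    unfolding mderiv_def fderiv_def Wn_def deg_ev by simp
  also have "\<dots> = mneg (mmul (LamPow g) (Wn tc)) \<alpha> \<beta> m"
    by (simp add: mderiv_W mneg_def LamPow_mmul Wn_def)
  finally show "mderiv (tc g) (Wn tc) \<alpha> \<beta> m = mneg (mmul (LamPow g) (Wn tc)) \<alpha> \<beta> m" .
qed

lemma Wn_comm: "mmul (Wn tc) (LamPow g) = mmul (LamPow g) (Wn tc)"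
proof (intro ext)
  fix \<alpha> \<beta> :: "'d mi" and m :: "'d tvar \<Rightarrow>\<^sub>0 nat"
  have "mmul (Wn tc) (LamPow g) \<alpha> \<beta> m = (-1) ^ deg m * mmul (W0 tc) (LamPow g) \<alpha> \<beta> m"
    by (rule mmul_LamPow_scalar) (simp add: Wn_def)
  also have "\<dots> = mmul (LamPow g) (Wn tc) \<alpha> \<beta> m"
    by (simp add: W_comm LamPow_mmul Wn_def)
  finally show "mmul (Wn tc) (LamPow g) \<alpha> \<beta> m = mmul (LamPow g) (Wn tc) \<alpha> \<beta> m" .
qed

lemma W_keys: "v \<notin> range tc \<Longrightarrow> W0 tc \<alpha> \<beta> (m + ev v) = 0"
proof (rule ccontr)
  assume v: "v \<notin> range tc" and nz: "W0 tc \<alpha> \<beta> (m + ev v) \<noteq> 0"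
  have "v \<in> Poly_Mapping.keys (m + ev v)" by (simp add: in_keys_iff lookup_add)
  then show False using W_prop[OF nz] v by blast
qed

lemma mderiv_W_other: "v \<notin> range tc \<Longrightarrow> mderiv v (W0 tc) = mzero"
proof (intro ext)
  fix \<alpha> \<beta> m assume v: "v \<notin> range tc"
  show "mderiv v (W0 tc) \<alpha> \<beta> m = mzero \<alpha> \<beta> m"
    unfolding mderiv_def fderiv_def W_keys[OF v] mzero_def by simp
qed

lemma mderiv_Wn_other: "v \<notin> range tc \<Longrightarrow> mderiv v (Wn tc) = mzero"
proof (intro ext)
  fix \<alpha> \<beta> m assume v: "v \<notin> range tc"
  show "mderiv v (Wn tc) \<alpha> \<beta> m = mzero \<alpha> \<beta> m"
    unfolding mderiv_def fderiv_def Wn_def W_keys[OF v] mzero_def by simp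
qed

end

lemma fps_const:
  assumes "\<And>v. fderiv v f = (\<lambda>_. 0)" and "m \<noteq> 0"
  shows "f m = 0"
proof -
  from assms(2) obtain v where v: "v \<in> Poly_Mapping.keys m"
    by (metis all_not_in_conv keys_eq_empty)
  then have nz: "Poly_Mapping.lookup m v \<noteq> 0" by (simp add: in_keys_iff)
  have h: "fderiv v f (m - ev v) = 0" using assms(1) by simp
  have "of_nat (Poly_Mapping.lookup (m - ev v) v + 1) * f m = 0"
    using h unfolding fderiv_def pm_sub_add[OF nz] .
  moreover have "(of_nat (Poly_Mapping.lookup (m - ev v) v + 1)::complex) \<noteq> 0"
    by (simp only: of_nat_eq_0_iff)
  ultimately show ?thesis by simp
qed

lemma pm_add_eq0: "(a::'a \<Rightarrow>\<^sub>0 nat) + b = 0 \<Longrightarrow> a = 0"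
proof (rule poly_mapping_eqI)
  fix k assume "a + b = 0"
  then have "Poly_Mapping.lookup (a + b) k = 0" by simp
  then show "Poly_Mapping.lookup a k = Poly_Mapping.lookup 0 k" by (simp add: lookup_add)
qed

lemma fmul_at0: "fmul (f::'d fps) g 0 = f 0 * g 0"
proof -
  have "splt (0::'d tvar \<Rightarrow>\<^sub>0 nat) = {(0, 0)}"
    using pm_add_eq0 add.commute by fastforce
  note e = this
  show ?thesis unfolding fmul_split e by simp
qed

lemma madd_mneg_self: "madd A (mneg A) = mzero"
  by (intro ext) (simp add: madd_def mneg_def fadd_def mzero_def)

lemma mmul_at0_diag:
  assumes "\<And>\<gamma>. A \<alpha> \<gamma> 0 \<noteq> 0 \<Longrightarrow> \<gamma> = \<alpha>"
  shows "mmul A (B::'d fmat) \<alpha> \<beta> 0 = A \<alpha> \<alpha> 0 * B \<alpha> \<beta> 0"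
proof -
  have "mmul A B \<alpha> \<beta> 0 = (\<Sum>\<gamma>\<in>{\<alpha>}. fmul (A \<alpha> \<gamma>) (B \<gamma> \<beta>) 0)"
  proof (rule mmul_sum)
    fix \<gamma> p q assume "p + q = (0::'d tvar \<Rightarrow>\<^sub>0 nat)" "A \<alpha> \<gamma> p \<noteq> 0"
    then have "A \<alpha> \<gamma> 0 \<noteq> 0" using pm_add_eq0 by metis
    then show "\<gamma> \<in> {\<alpha>}" using assms by blast
  qed simp
  then show ?thesis by (simp add: fmul_at0)
qed

lemma inverse_by_derivs:
  fixes P :: "'d fmat"
  assumes "\<And>v. mderiv v P = mzero" and "\<And>\<alpha> \<beta>. P \<alpha> \<beta> 0 = (if \<alpha> = \<beta> then 1 else 0)"
  shows "P = mone"
proof (intro ext)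
  fix \<alpha> \<beta> m
  show "P \<alpha> \<beta> m = mone \<alpha> \<beta> m"
  proof (cases "m = 0")
    case True then show ?thesis using assms(2) by (simp add: mone_def fconst_def)
  next
    case False
    have "fderiv v (P \<alpha> \<beta>) = (\<lambda>_. 0)" for v
      using fun_cong[OF fun_cong[OF assms(1)[of v], of \<alpha>], of \<beta>] by (simp add: mderiv_def mzero_def)
    then have "P \<alpha> \<beta> m = 0" using fps_const False by blast
    then show ?thesis using False by (simp add: mone_def fconst_def)
  qed
qed

context
  fixes tc :: "('d::finite) mi \<Rightarrow> 'd tvar"
  assumes twl: "\<And>\<gamma>. twl (tc \<gamma>) = mi_len \<gamma>" and inj: "inj tc"
begin

lemma W_Wn: "mmul (W0 tc) (Wn tc) = mone"
proof (rule inverse_by_derivs)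
  fix v
  have pf: "pf (W0 tc) (Wn tc)" by (rule lrf_pf[OF lrf_W[OF twl inj]])
  show "mderiv v (mmul (W0 tc) (Wn tc)) = mzero"
  proof (cases "v \<in> range tc")
    case True
    then obtain g where v: "v = tc g" by blast
    have "mmul (W0 tc) (mmul (LamPow g) (Wn tc)) = mmul (mmul (W0 tc) (LamPow g)) (Wn tc)"
      using assoc_ll[OF lrf_W[OF twl inj] lrf_LamPow] by simp
    also have "\<dots> = mmul (mmul (LamPow g) (W0 tc)) (Wn tc)" by (simp add: W_comm[OF twl inj])
    finally have e: "mmul (W0 tc) (mmul (LamPow g) (Wn tc)) = mmul (mmul (LamPow g) (W0 tc)) (Wn tc)" .
    show ?thesis unfolding mderiv_mmul[OF pf] v mderiv_W[OF twl inj] mderiv_Wn[OF twl inj]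
      mmul_mneg_right e by (rule madd_mneg_self)
  next
    case False
    show ?thesis unfolding mderiv_mmul[OF pf] mderiv_W_other[OF twl inj False] mderiv_Wn_other[OF twl inj False]
      mmul_mzero_left mmul_mzero_right by (rule madd_mzero)
  qed
next
  fix \<alpha> \<beta>
  show "mmul (W0 tc) (Wn tc) \<alpha> \<beta> 0 = (if \<alpha> = \<beta> then 1 else 0)"
    by (subst mmul_at0_diag) (auto simp: W_zero[OF twl inj] Wn_zero[OF twl inj] split: if_splits)
qed

lemma Wn_W: "mmul (Wn tc) (W0 tc) = mone"
proof (rule inverse_by_derivs)
  fix v
  have pf: "pf (Wn tc) (W0 tc)" by (rule lrf_pf[OF lrf_Wn[OF twl inj]])
  show "mderiv v (mmul (Wn tc) (W0 tc)) = mzero"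
  proof (cases "v \<in> range tc")
    case True
    then obtain g where v: "v = tc g" by blast
    have "mmul (Wn tc) (mmul (LamPow g) (W0 tc)) = mmul (mmul (Wn tc) (LamPow g)) (W0 tc)"
      using assoc_ll[OF lrf_Wn[OF twl inj] lrf_LamPow] by simp
    also have "\<dots> = mmul (mmul (LamPow g) (Wn tc)) (W0 tc)" by (simp add: Wn_comm[OF twl inj])
    finally have e: "mmul (Wn tc) (mmul (LamPow g) (W0 tc)) = mmul (mmul (LamPow g) (Wn tc)) (W0 tc)" .
    have "madd (mneg (mmul (mmul (LamPow g) (Wn tc)) (W0 tc))) (mmul (mmul (LamPow g) (Wn tc)) (W0 tc)) = mzero"
      by (intro ext) (simp add: madd_def mneg_def fadd_def mzero_def)
    then show ?thesis unfolding mderiv_mmul[OF pf] v mderiv_W[OF twl inj] mderiv_Wn[OF twl inj]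
      mmul_mneg_left e .
  next
    case False
    show ?thesis unfolding mderiv_mmul[OF pf] mderiv_W_other[OF twl inj False] mderiv_Wn_other[OF twl inj False]
      mmul_mzero_left mmul_mzero_right by (rule madd_mzero)
  qed
next
  fix \<alpha> \<beta>
  show "mmul (Wn tc) (W0 tc) \<alpha> \<beta> 0 = (if \<alpha> = \<beta> then 1 else 0)"
    by (subst mmul_at0_diag) (auto simp: W_zero[OF twl inj] Wn_zero[OF twl inj] split: if_splits)
qed

lemma minv_W: "minv (W0 tc) = Wn tc"
  unfolding minv_def
proof (rule the_equality)
  show "mmul (W0 tc) (Wn tc) = mone \<and> mmul (Wn tc) (W0 tc) = mone" using W_Wn Wn_W by simp
next
  fix B assume h: "mmul (W0 tc) B = mone \<and> mmul B (W0 tc) = mone"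
  have "B = mmul (mmul (Wn tc) (W0 tc)) B" using Wn_W by (simp add: mmul_mone_left)
  also have "\<dots> = mmul (Wn tc) (mmul (W0 tc) B)" by (rule assoc_ll[OF lrf_Wn[OF twl inj] lrf_W[OF twl inj]])
  also have "\<dots> = Wn tc" using h by (simp add: mmul_mone_right)
  finally show "B = Wn tc" .
qed

end

subsection \<open>Upper triangularity and the factorization\<close>

definition uppr :: "('d::finite) fmat \<Rightarrow> bool" where
  "uppr X \<longleftrightarrow> (\<forall>\<alpha> \<beta> p. mi_len \<beta> < mi_len \<alpha> \<longrightarrow> X \<alpha> \<beta> p = 0)"

lemma bd_rb: "block_diagonal H \<Longrightarrow> rb H 0"
  unfolding block_diagonal_def rb_def by (metis add_0_right fconst0 order_refl)

lemma bd_ne: "block_diagonal H \<Longrightarrow> H \<alpha> \<beta> p \<noteq> 0 \<Longrightarrow> mi_len \<beta> = mi_len \<alpha>"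
  unfolding block_diagonal_def by (metis fconst0)

lemma up_cancel:
  fixes X R H B :: "('d::finite) fmat"
  assumes lX: "lrf X" and uR: "uppr R"
    and Rd: "\<And>\<alpha> \<beta>. mi_len \<alpha> = mi_len \<beta> \<Longrightarrow> R \<alpha> \<beta> = H \<alpha> \<beta>"
    and Hbd: "block_diagonal H" and HB: "mmul H B = mone" and XR: "uppr (mmul X R)"
  shows "uppr X"
proof -
  have main: "\<forall>\<alpha> \<beta> p. mi_len \<beta> = j \<longrightarrow> j < mi_len \<alpha> \<longrightarrow> X \<alpha> \<beta> p = 0" for j
  proof (induction j rule: less_induct)
    case (less j)
    show ?case
    proof (intro allI impI)
      fix \<alpha> \<beta> :: "'d mi" and p assume bj: "mi_len \<beta> = j" and ja: "j < mi_len \<alpha>"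
      define Xj where "Xj = (\<lambda>\<alpha>' \<gamma>. if mi_len \<gamma> = j then X \<alpha>' \<gamma> else (\<lambda>_::'d tvar \<Rightarrow>\<^sub>0 nat. 0::complex))"
      define F where "F = {\<gamma>::'d mi. mi_len \<gamma> = j}"
      have fF: "finite F" unfolding F_def by (rule finite_subset[OF _ finite_len[of j]]) auto
      have lXj: "lrf Xj"
        by (rule rb_lrf[of _ j]) (auto simp: rb_def Xj_def split: if_splits)
      have lH: "lrf H" using bd_rb[OF Hbd] rb_lrf by blast
      have row0: "mmul Xj H \<alpha> \<delta> m = 0" for \<delta> m
      proof -
        have e1: "mmul Xj H \<alpha> \<delta> m = (\<Sum>\<gamma>\<in>F. fmul (X \<alpha> \<gamma>) (H \<gamma> \<delta>) m)"
        proof -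
          have "mmul Xj H \<alpha> \<delta> m = (\<Sum>\<gamma>\<in>F. fmul (Xj \<alpha> \<gamma>) (H \<gamma> \<delta>) m)"
            by (rule mmul_sum[OF fF]) (auto simp: Xj_def F_def split: if_splits)
          also have "\<dots> = (\<Sum>\<gamma>\<in>F. fmul (X \<alpha> \<gamma>) (H \<gamma> \<delta>) m)"
            by (rule sum.cong) (auto simp: Xj_def F_def)
          finally show ?thesis .
        qed
        show ?thesis
        proof (cases "mi_len \<delta> = j")
          case False
          have "fmul (X \<alpha> \<gamma>) (H \<gamma> \<delta>) m = 0" if "\<gamma> \<in> F" for \<gamma>
            by (rule fmul_eq0) (use bd_ne[OF Hbd] that False in \<open>auto simp: F_def\<close>)
          then show ?thesis unfolding e1 by simp
        next
          case True
          have "mmul X R \<alpha> \<delta> m = (\<Sum>\<gamma>\<in>F. fmul (X \<alpha> \<gamma>) (R \<gamma> \<delta>) m)"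
          proof (rule mmul_sum[OF fF])
            fix \<gamma> q r assume h: "X \<alpha> \<gamma> q \<noteq> 0" "R \<gamma> \<delta> r \<noteq> 0"
            have "\<not> mi_len \<gamma> < j"
            proof
              assume "mi_len \<gamma> < j"
              then have "X \<alpha> \<gamma> q = 0" using less.IH[of "mi_len \<gamma>"] ja by auto
              then show False using h by simp
            qed
            moreover have "\<not> mi_len \<delta> < mi_len \<gamma>" using uR h(2) unfolding uppr_def by blast
            ultimately show "\<gamma> \<in> F" using True unfolding F_def by simp
          qed
          also have "\<dots> = (\<Sum>\<gamma>\<in>F. fmul (X \<alpha> \<gamma>) (H \<gamma> \<delta>) m)"
            by (rule sum.cong) (auto simp: F_def Rd True)
          finally have "mmul Xj H \<alpha> \<delta> m = mmul X R \<alpha> \<delta> m" using e1 by simp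
          also have "\<dots> = 0" using XR True ja unfolding uppr_def by blast
          finally show ?thesis .
        qed
      qed
      have "Xj = mmul (mmul Xj H) B" using HB assoc_ll[OF lXj lH, of B] by (simp add: mmul_mone_right)
      then have "Xj \<alpha> \<beta> p = mmul (mmul Xj H) B \<alpha> \<beta> p" by simp
      also have "\<dots> = 0" using mmul_ne0[of "mmul Xj H" B \<alpha> \<beta> p] row0 by blast
      finally show "X \<alpha> \<beta> p = 0" using bj by (simp add: Xj_def)
    qed
  qed
  show ?thesis unfolding uppr_def using main by blast
qed

lemma uppr_mderiv: "uppr X \<Longrightarrow> uppr (mderiv v X)"
  unfolding uppr_def mderiv_def fderiv_def by simp

lemma mderiv_mtr: "mderiv v (mtr A) = mtr (mderiv v A)"
  by (simp add: mderiv_def mtr_def)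

lemma mtr_mzero: "mtr mzero = mzero"
  by (simp add: mtr_def mzero_def)

lemma mderiv_const: "mderiv v (\<lambda>\<alpha> \<beta>. fconst (G \<alpha> \<beta>)) = mzero"
  by (intro ext) (simp add: mderiv_def mzero_def)

lemma tl_T1': "twl (T1 \<gamma>) = mi_len \<gamma>" and tl_T2': "twl (T2 \<gamma>) = mi_len \<gamma>"
  by simp_all

lemma inj_T1: "inj T1" and inj_T2: "inj T2"
  by (auto intro: injI)

lemma mderiv_Gt:
  fixes G :: "('d::finite) mi \<Rightarrow> 'd mi \<Rightarrow> complex"
  shows "mderiv (T1 g) (Gt G) = mmul (LamPow g) (Gt G)"
proof -
  let ?W = "W0 (T1::'d mi \<Rightarrow> 'd tvar)" and ?G = "\<lambda>\<alpha> \<beta>. fconst (G \<alpha> \<beta>) :: 'd fps"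
    and ?V = "minv (W0 (T2::'d mi \<Rightarrow> 'd tvar))" and ?L = "LamPow g"
  have V: "?V = Wn T2" by (rule minv_W[OF tl_T2' inj_T2])
  have lV: "lrf ?V" unfolding V by (rule lrf_Wn[OF tl_T2' inj_T2])
  have lW: "lrf ?W" by (rule lrf_W[OF tl_T1' inj_T1])
  have nr: "T1 g \<notin> range (T2::'d mi \<Rightarrow> 'd tvar)" by auto
  have dV: "mderiv (T1 g) (mtr ?V) = mzero"
    unfolding mderiv_mtr V mderiv_Wn_other[OF tl_T2' inj_T2 nr] by (rule mtr_mzero)
  have dX: "mderiv (T1 g) (mmul ?W ?G) = mmul ?L (mmul ?W ?G)"
    unfolding mderiv_mmul[OF lrf_pf[OF lW]] mderiv_W[OF tl_T1' inj_T1] mderiv_const mmul_mzero_right madd_mzero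
    by (rule assoc_ll[OF lrf_LamPow lW])
  have "mderiv (T1 g) (Gt G) = madd (mmul (mmul ?L (mmul ?W ?G)) (mtr ?V)) mzero"
    unfolding Gt_def mderiv_mmul[OF clf_pf[OF iffD2[OF clf_mtr lV]]] dX dV mmul_mzero_right ..
  also have "\<dots> = mmul ?L (Gt G)"
    unfolding madd_mzero Gt_def by (rule assoc_lc[OF lrf_LamPow iffD2[OF clf_mtr lV]])
  finally show ?thesis .
qed

subsection \<open>Applying matrices to the monomial vector\<close>

definition ap :: "('d::finite) fmat \<Rightarrow> ('d \<Rightarrow> complex) \<Rightarrow> 'd fvec" where
  "ap A z = (\<lambda>\<alpha> m. infsum (\<lambda>\<beta>. A \<alpha> \<beta> m * chi z \<beta>) UNIV)"

lemma Psi1_ap: "Psi1 S z = ap (mmul S (W0 T1)) z"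
  by (simp add: Psi1_def ap_def)

definition rowsupp :: "'d fmat \<Rightarrow> 'd mi \<Rightarrow> ('d tvar \<Rightarrow>\<^sub>0 nat) \<Rightarrow> 'd mi set" where
  "rowsupp A \<alpha> m = {\<beta>. \<exists>p q. p + q = m \<and> A \<alpha> \<beta> p \<noteq> 0}"

lemma rowsupp_fin: "lrf A \<Longrightarrow> finite (rowsupp A \<alpha> m)"
  by (simp add: lrf_def rowsupp_def)

lemma rowsupp_mem: "A \<alpha> \<beta> m \<noteq> 0 \<Longrightarrow> \<beta> \<in> rowsupp A \<alpha> m"
  unfolding rowsupp_def by (rule CollectI, rule exI[of _ m], rule exI[of _ 0]) simp

lemma ap_sum:
  assumes "finite F" "\<And>\<beta>. A \<alpha> \<beta> m \<noteq> 0 \<Longrightarrow> \<beta> \<in> F"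
  shows "ap A z \<alpha> m = (\<Sum>\<beta>\<in>F. A \<alpha> \<beta> m * chi z \<beta>)"
proof -
  have "ap A z \<alpha> m = infsum (\<lambda>\<beta>. A \<alpha> \<beta> m * chi z \<beta>) F"
    unfolding ap_def by (rule infsum_cong_neutral) (use assms(2) in auto)
  then show ?thesis using assms(1) by simp
qed

lemma vderiv_ap:
  assumes "lrf A"
  shows "vderiv v (ap A z) = ap (mderiv v A) z"
proof (intro ext)
  fix \<alpha> m
  let ?F = "rowsupp A \<alpha> (m + ev v)"
  have fF: "finite ?F" by (rule rowsupp_fin[OF assms])
  have "vderiv v (ap A z) \<alpha> m = of_nat (Poly_Mapping.lookup m v + 1) * (\<Sum>\<beta>\<in>?F. A \<alpha> \<beta> (m + ev v) * chi z \<beta>)"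
  proof -
    have e: "ap A z \<alpha> (m + ev v) = (\<Sum>\<beta>\<in>?F. A \<alpha> \<beta> (m + ev v) * chi z \<beta>)"
      by (rule ap_sum[OF fF]) (rule rowsupp_mem)
    show ?thesis unfolding vderiv_def fderiv_def e by (rule refl)
  qed
  also have "\<dots> = (\<Sum>\<beta>\<in>?F. mderiv v A \<alpha> \<beta> m * chi z \<beta>)"
    by (simp add: sum_distrib_left mderiv_def fderiv_def mult.assoc)
  also have "\<dots> = ap (mderiv v A) z \<alpha> m"
  proof (rule ap_sum[OF fF, symmetric])
    fix \<beta> assume "mderiv v A \<alpha> \<beta> m \<noteq> 0"
    then have "A \<alpha> \<beta> (m + ev v) \<noteq> 0" by (simp add: mderiv_def fderiv_def)
    then show "\<beta> \<in> ?F" by (rule rowsupp_mem)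
  qed
  finally show "vderiv v (ap A z) \<alpha> m = ap (mderiv v A) z \<alpha> m" .
qed

lemma vadd_ap:
  assumes "lrf A" "lrf B"
  shows "vadd (ap A z) (ap B z) = ap (madd A B) z"
proof (intro ext)
  fix \<alpha> m
  let ?F = "rowsupp A \<alpha> m \<union> rowsupp B \<alpha> m"
  have fF: "finite ?F" using rowsupp_fin assms by blast
  have 1: "ap A z \<alpha> m = (\<Sum>\<beta>\<in>?F. A \<alpha> \<beta> m * chi z \<beta>)"
    by (rule ap_sum[OF fF]) (use rowsupp_mem in blast)
  have 2: "ap B z \<alpha> m = (\<Sum>\<beta>\<in>?F. B \<alpha> \<beta> m * chi z \<beta>)"
    by (rule ap_sum[OF fF]) (use rowsupp_mem in blast)
  have 3: "ap (madd A B) z \<alpha> m = (\<Sum>\<beta>\<in>?F. madd A B \<alpha> \<beta> m * chi z \<beta>)"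
  proof (rule ap_sum[OF fF])
    fix \<beta> assume "madd A B \<alpha> \<beta> m \<noteq> 0"
    then have "A \<alpha> \<beta> m \<noteq> 0 \<or> B \<alpha> \<beta> m \<noteq> 0" by (auto simp: madd_def fadd_def)
    then show "\<beta> \<in> ?F" using rowsupp_mem by blast
  qed
  show "vadd (ap A z) (ap B z) \<alpha> m = ap (madd A B) z \<alpha> m"
    unfolding vadd_def fadd_def 1 2 3 by (simp add: madd_def fadd_def distrib_right sum.distrib)
qed

lemma mvmul_ap:
  assumes lU: "lrf U" and lM: "lrf M"
  shows "mvmul U (ap M z) = ap (mmul U M) z"
proof (intro ext)
  fix \<alpha> m
  let ?G = "rowsupp U \<alpha> m"
  let ?B = "\<Union>\<gamma>\<in>?G. rowsupp M \<gamma> m"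
  have fG: "finite ?G" by (rule rowsupp_fin[OF lU])
  have fB: "finite ?B" by (rule finite_UN_I[OF fG rowsupp_fin[OF lM]])
  have inG: "\<gamma> \<in> ?G" if "p + q = m" "U \<alpha> \<gamma> p \<noteq> 0" for \<gamma> p q
    using that unfolding rowsupp_def by blast
  have inB: "\<beta> \<in> ?B" if "p + q = m" "U \<alpha> \<gamma> p \<noteq> 0" "M \<gamma> \<beta> q \<noteq> 0" for \<gamma> \<beta> p q
  proof -
    have qp: "q + p = m" using that(1) by (simp add: add.commute)
    have "\<beta> \<in> rowsupp M \<gamma> m" unfolding rowsupp_def using qp that(3) by blast
    then show ?thesis using inG[OF that(1,2)] by blast
  qed
  have "mvmul U (ap M z) \<alpha> m = infsum (\<lambda>\<gamma>. fmul (U \<alpha> \<gamma>) (ap M z \<gamma>) m) ?G"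
    unfolding mvmul_def
  proof (rule infsum_cong_neutral)
    fix \<gamma> assume "\<gamma> \<in> UNIV - ?G"
    then have "\<gamma> \<notin> ?G" by simp
    then show "fmul (U \<alpha> \<gamma>) (ap M z \<gamma>) m = 0"
      by (intro fmul_eq0) (use inG in blast)
  qed auto
  also have "\<dots> = (\<Sum>\<gamma>\<in>?G. fmul (U \<alpha> \<gamma>) (ap M z \<gamma>) m)" using fG by simp
  also have "\<dots> = (\<Sum>\<gamma>\<in>?G. \<Sum>x\<in>splt m. \<Sum>\<beta>\<in>?B. U \<alpha> \<gamma> (fst x) * (M \<gamma> \<beta> (snd x) * chi z \<beta>))"
  proof (rule sum.cong[OF refl])
    fix \<gamma> assume g: "\<gamma> \<in> ?G"
    show "fmul (U \<alpha> \<gamma>) (ap M z \<gamma>) m = (\<Sum>x\<in>splt m. \<Sum>\<beta>\<in>?B. U \<alpha> \<gamma> (fst x) * (M \<gamma> \<beta> (snd x) * chi z \<beta>))"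
      unfolding fmul_split
    proof (rule sum.cong[OF refl])
      fix x assume x: "x \<in> splt m"
      show "U \<alpha> \<gamma> (fst x) * ap M z \<gamma> (snd x) = (\<Sum>\<beta>\<in>?B. U \<alpha> \<gamma> (fst x) * (M \<gamma> \<beta> (snd x) * chi z \<beta>))"
      proof (cases "U \<alpha> \<gamma> (fst x) = 0")
        case True then show ?thesis by simp
      next
        case False
        have "ap M z \<gamma> (snd x) = (\<Sum>\<beta>\<in>?B. M \<gamma> \<beta> (snd x) * chi z \<beta>)"
          by (rule ap_sum[OF fB]) (use inB x False in auto)
        then show ?thesis by (simp add: sum_distrib_left)
      qed
    qed
  qed
  also have "\<dots> = (\<Sum>\<gamma>\<in>?G. \<Sum>\<beta>\<in>?B. \<Sum>x\<in>splt m. U \<alpha> \<gamma> (fst x) * (M \<gamma> \<beta> (snd x) * chi z \<beta>))"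
    by (rule sum.cong[OF refl], rule sum.swap)
  also have "\<dots> = (\<Sum>\<beta>\<in>?B. \<Sum>\<gamma>\<in>?G. \<Sum>x\<in>splt m. U \<alpha> \<gamma> (fst x) * (M \<gamma> \<beta> (snd x) * chi z \<beta>))"
    by (rule sum.swap)
  also have "\<dots> = (\<Sum>\<beta>\<in>?B. (\<Sum>\<gamma>\<in>?G. fmul (U \<alpha> \<gamma>) (M \<gamma> \<beta>) m) * chi z \<beta>)"
    by (simp add: fmul_split sum_distrib_right mult.assoc)
  also have "\<dots> = (\<Sum>\<beta>\<in>?B. mmul U M \<alpha> \<beta> m * chi z \<beta>)"
  proof (rule sum.cong[OF refl])
    fix \<beta>
    have "mmul U M \<alpha> \<beta> m = (\<Sum>\<gamma>\<in>?G. fmul (U \<alpha> \<gamma>) (M \<gamma> \<beta>) m)"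
    proof (rule mmul_sum[OF fG])
      fix \<gamma> p q assume "p + q = m" "U \<alpha> \<gamma> p \<noteq> 0"
      then show "\<gamma> \<in> ?G" by (rule inG)
    qed
    then show "(\<Sum>\<gamma>\<in>?G. fmul (U \<alpha> \<gamma>) (M \<gamma> \<beta>) m) * chi z \<beta> = mmul U M \<alpha> \<beta> m * chi z \<beta>" by simp
  qed
  also have "\<dots> = ap (mmul U M) z \<alpha> m"
  proof (rule ap_sum[OF fB, symmetric])
    fix \<beta> assume "mmul U M \<alpha> \<beta> m \<noteq> 0"
    from mmul_ne0[OF this] obtain \<gamma> p q where "p + q = m" "U \<alpha> \<gamma> p \<noteq> 0" "M \<gamma> \<beta> q \<noteq> 0" by blast
    then show "\<beta> \<in> ?B" by (rule inB)
  qed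
  finally show "mvmul U (ap M z) \<alpha> m = ap (mmul U M) z \<alpha> m" .
qed

context
  fixes G :: "('d::finite) mi \<Rightarrow> 'd mi \<Rightarrow> complex"
    and S1 S2 H :: "'d fmat"
  assumes blu1: "block_lower_unitriangular S1"
    and blu2: "block_lower_unitriangular S2"
    and bdH: "block_diagonal H"
    and invH: "minvertible H"
    and fac: "Gt G = mmul (mmul (minv S1) H) (mtr (minv S2))"
begin

abbreviation "Si \<equiv> minv S1"
definition "E g = mderiv (T1 g) S1"
definition "D g = madd (E g) (mmul S1 (LamPow g))"
definition "Y g = mmul (D g) Si"
definition "R = mmul H (mtr (minv S2))"

lemma rbS: "rb S1 0" by (rule blu_rb[OF blu1])
lemma lS: "lrf S1" by (rule blu_lrf[OF blu1])
lemma blSi: "block_lower_unitriangular Si" by (rule blu_inv(3)[OF blu1])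
lemma rbSi: "rb Si 0" by (rule blu_rb[OF blSi])
lemma lSi: "lrf Si" by (rule blu_lrf[OF blSi])
lemma SSi: "mmul S1 Si = mone" by (rule blu_inv(1)[OF blu1])
lemma SiS: "mmul Si S1 = mone" by (rule blu_inv(2)[OF blu1])

lemma rbE: "rb (E g) 0" unfolding E_def by (rule rb_mderiv[OF rbS])
lemma lE: "lrf (E g)" using rbE rb_lrf by blast

lemma rbD: "rb (D g) (mi_len g)"
  unfolding D_def
  by (rule rb_madd) (auto intro: rb_mono[OF rbE] rb_mmul[OF rbS rb_LamPow, simplified])

lemma lD: "lrf (D g)" using rbD rb_lrf by blast

lemma rbY: "rb (Y g) (mi_len g)"
  unfolding Y_def using rb_mmul[OF rbD rbSi] by simp

lemma lY: "lrf (Y g)" using rbY rb_lrf by blast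

lemma YS: "mmul (Y g) S1 = D g"
  unfolding Y_def using assoc_ll[OF lD lSi, where C=S1] by (simp add: SiS mmul_mone_right)

lemma SGt: "mmul S1 (Gt G) = R"
proof -
  have lSiH: "lrf (mmul Si H)" by (rule lrf_mmul[OF lSi rb_lrf[OF bd_rb[OF bdH]]])
  have "mmul S1 (Gt G) = mmul (mmul S1 (mmul Si H)) (mtr (minv S2))"
    unfolding fac by (rule assoc_ll[OF lS lSiH, symmetric])
  also have "mmul S1 (mmul Si H) = H"
    using assoc_ll[OF lS lSi, where C=H] by (simp add: SSi mmul_mone_left)
  finally show ?thesis by (simp add: R_def)
qed

lemma blSi2: "block_lower_unitriangular (minv S2)" by (rule blu_inv(3)[OF blu2])

lemma uR: "uppr R"
  unfolding uppr_def
proof (intro allI impI)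
  fix \<alpha> \<beta> :: "'d mi" and p assume lt: "mi_len \<beta> < mi_len \<alpha>"
  show "R \<alpha> \<beta> p = 0"
  proof (rule ccontr)
    assume "R \<alpha> \<beta> p \<noteq> 0"
    from mmul_ne0[OF this[unfolded R_def]] obtain \<gamma> q r where
      h: "H \<alpha> \<gamma> q \<noteq> 0" "mtr (minv S2) \<gamma> \<beta> r \<noteq> 0" by blast
    have "mi_len \<gamma> = mi_len \<alpha>" using bd_ne[OF bdH h(1)] .
    moreover have "mi_len \<gamma> \<le> mi_len \<beta>"
    proof (rule ccontr)
      assume "\<not> mi_len \<gamma> \<le> mi_len \<beta>"
      then have "minv S2 \<beta> \<gamma> = fconst 0" using blSi2 unfolding block_lower_unitriangular_def by simp
      then show False using h(2) by (simp add: mtr_def)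
    qed
    ultimately show False using lt by simp
  qed
qed

lemma Rd: "mi_len \<alpha> = mi_len \<beta> \<Longrightarrow> R \<alpha> \<beta> = H \<alpha> \<beta>"
proof (rule ext)
  fix m assume eq: "mi_len \<alpha> = mi_len \<beta>"
  have d: "minv S2 \<beta> \<gamma> = fconst (if \<beta> = \<gamma> then 1 else 0)" if "mi_len \<gamma> = mi_len \<beta>" for \<gamma>
    using blSi2 that unfolding block_lower_unitriangular_def by simp
  have "R \<alpha> \<beta> m = (\<Sum>\<gamma>\<in>{\<beta>}. fmul (H \<alpha> \<gamma>) (mtr (minv S2) \<gamma> \<beta>) m)"
    unfolding R_def
  proof (rule mmul_sum)
    fix \<gamma> q r assume h: "H \<alpha> \<gamma> q \<noteq> 0" "mtr (minv S2) \<gamma> \<beta> r \<noteq> 0"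
    have "mi_len \<gamma> = mi_len \<beta>" using bd_ne[OF bdH h(1)] eq by simp
    have "minv S2 \<beta> \<gamma> r \<noteq> 0" using h(2) by (simp add: mtr_def)
    then have "fconst (if \<beta> = \<gamma> then 1 else 0) r \<noteq> 0" unfolding d[OF \<open>mi_len \<gamma> = mi_len \<beta>\<close>] .
    then show "\<gamma> \<in> {\<beta>}" by (cases "\<beta> = \<gamma>") auto
  qed simp
  then show "R \<alpha> \<beta> m = H \<alpha> \<beta> m" by (simp add: mtr_def d fmul_fconst_right)
qed

lemma dR: "mderiv (T1 g) R = mmul (Y g) R"
proof -
  have lSL: "lrf (mmul S1 (LamPow g))" by (rule lrf_mmul[OF lS lrf_LamPow])
  have "mderiv (T1 g) R = madd (mmul (E g) (Gt G)) (mmul S1 (mmul (LamPow g) (Gt G)))"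
    unfolding SGt[symmetric] mderiv_mmul[OF lrf_pf[OF lS]] mderiv_Gt E_def ..
  also have "mmul S1 (mmul (LamPow g) (Gt G)) = mmul (mmul S1 (LamPow g)) (Gt G)"
    by (rule assoc_ll[OF lS lrf_LamPow, symmetric])
  also have "madd (mmul (E g) (Gt G)) (mmul (mmul S1 (LamPow g)) (Gt G)) = mmul (D g) (Gt G)"
    unfolding D_def by (rule madd_mmul_left[OF lrf_pf[OF lE] lrf_pf[OF lSL], symmetric])
  also have "\<dots> = mmul (Y g) R"
    unfolding YS[symmetric] SGt[symmetric] by (rule assoc_ll[OF lY lS])
  finally show ?thesis .
qed

lemma uY: "uppr (Y g)"
proof -
  obtain B where HB: "mmul H B = mone" using invH unfolding minvertible_def by blast
  show ?thesis
  proof (rule up_cancel[OF lY uR Rd bdH HB])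
    show "uppr (mmul (Y g) R)" unfolding dR[symmetric] by (rule uppr_mderiv[OF uR])
  qed
qed


lemma V_ne: "Vab S1 a b \<alpha> \<beta> p \<noteq> 0 \<Longrightarrow> mi_len \<beta> = mi_len \<alpha>"
proof -
  assume "Vab S1 a b \<alpha> \<beta> p \<noteq> 0"
  from mmul_ne0[OF this[unfolded Vab_def]] obtain \<gamma> q r where
    h: "mderiv (T1 (mi_e a)) (beta1 S1) \<alpha> \<gamma> q \<noteq> 0" "Lam b \<gamma> \<beta> r \<noteq> 0" by blast
  from h(1) have "beta1 S1 \<alpha> \<gamma> (q + ev (T1 (mi_e a))) \<noteq> 0" by (simp add: mderiv_def fderiv_def)
  then have "mi_len \<alpha> = mi_len \<gamma> + 1" unfolding beta1_def by (auto split: if_splits)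
  moreover from h(2) have "\<beta> = mi_add \<gamma> (mi_e b)" by (auto simp: Lam_def fconst_def split: if_splits)
  ultimately show ?thesis by simp
qed

lemma U_ne: "Uab S1 a b \<alpha> \<beta> p \<noteq> 0 \<Longrightarrow> mi_len \<beta> = mi_len \<alpha>"
proof -
  assume h: "Uab S1 a b \<alpha> \<beta> p \<noteq> 0"
  then have "Vab S1 a b \<alpha> \<beta> p \<noteq> 0 \<or> Vab S1 b a \<alpha> \<beta> p \<noteq> 0"
    by (auto simp: Uab_def madd_def mneg_def fadd_def)
  then show ?thesis using V_ne by blast
qed

lemma rbU: "rb (Uab S1 a b) 0" unfolding rb_def using U_ne by fastforce
lemma lU: "lrf (Uab S1 a b)" using rbU rb_lrf by blast
lemma uU: "uppr (Uab S1 a b)" unfolding uppr_def using U_ne by fastforce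

lemma distr4:
  assumes "lrf X1" "lrf X2" "lrf X3" "lrf X4"
  shows "mmul (madd X1 (mneg (madd X2 (madd X3 X4)))) C
       = madd (mmul X1 C) (mneg (madd (mmul X2 C) (madd (mmul X3 C) (mmul X4 C))))"
proof -
  have l34: "lrf (madd X3 X4)" by (rule lrf_madd[OF assms(3,4)])
  have l234: "lrf (madd X2 (madd X3 X4))" by (rule lrf_madd[OF assms(2) l34])
  show ?thesis
    unfolding madd_mmul_left[OF lrf_pf[OF assms(1)] lrf_pf[OF lrf_mneg[OF l234]]]
      mmul_mneg_left madd_mmul_left[OF lrf_pf[OF assms(2)] lrf_pf[OF l34]]
      madd_mmul_left[OF lrf_pf[OF assms(3)] lrf_pf[OF assms(4)]] ..
qed

definition "Zm a b = madd (Y (mi_add (mi_e a) (mi_e b)))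
   (mneg (madd (mderiv (T1 (mi_e a)) (Y (mi_e b))) (madd (mmul (Y (mi_e b)) (Y (mi_e a))) (Uab S1 a b))))"

definition "Nm a b = madd (E (mi_add (mi_e a) (mi_e b)))
   (mneg (madd (mderiv (T1 (mi_e a)) (E (mi_e b))) (madd (mmul (E (mi_e a)) (Lam b))
      (madd (mmul (E (mi_e b)) (Lam a)) (mmul (Uab S1 a b) S1)))))"

lemma ZS: "mmul (Zm a b) S1 = Nm a b"
proof -
  let ?ea = "mi_e a" and ?eb = "mi_e b" and ?eab = "mi_add (mi_e a) (mi_e b)" and ?va = "T1 (mi_e a)"
  have La: "Lam a = LamPow ?ea" and Lb: "Lam b = LamPow ?eb" by (simp_all add: Lam_LamPow)
  have lYab: "lrf (Y ?eab)" and lYa: "lrf (Y ?ea)" and lYb: "lrf (Y ?eb)" by (rule lY)+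
  have ldYb: "lrf (mderiv ?va (Y ?eb))" by (rule lrf_mderiv[OF lYb])
  have lYY: "lrf (mmul (Y ?eb) (Y ?ea))" by (rule lrf_mmul[OF lYb lYa])
  have d: "mmul (Zm a b) S1 = madd (mmul (Y ?eab) S1) (mneg (madd (mmul (mderiv ?va (Y ?eb)) S1)
      (madd (mmul (mmul (Y ?eb) (Y ?ea)) S1) (mmul (Uab S1 a b) S1))))"
    unfolding Zm_def by (rule distr4[OF lYab ldYb lYY lU])
  have f1: "mmul (Y ?eab) S1 = madd (E ?eab) (mmul S1 (LamPow ?eab))"
    by (simp add: YS D_def)
  have f2a: "mderiv ?va (mmul (Y ?eb) S1) = madd (mmul (mderiv ?va (Y ?eb)) S1) (mmul (Y ?eb) (E ?ea))"
    unfolding mderiv_mmul[OF lrf_pf[OF lYb]] E_def ..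
  have f2b: "mderiv ?va (mmul (Y ?eb) S1) = madd (mderiv ?va (E ?eb)) (mmul (E ?ea) (LamPow ?eb))"
    unfolding YS D_def mderiv_madd mderiv_mmul[OF lrf_pf[OF lS]] mderiv_LamPow mmul_mzero_right madd_mzero E_def ..
  have f3: "mmul (mmul (Y ?eb) (Y ?ea)) S1
      = madd (mmul (Y ?eb) (E ?ea)) (madd (mmul (E ?eb) (LamPow ?ea)) (mmul S1 (LamPow ?eab)))"
  proof -
    have lSLa: "lrf (mmul S1 (LamPow ?ea))" by (rule lrf_mmul[OF lS lrf_LamPow])
    have "mmul (mmul (Y ?eb) (Y ?ea)) S1 = mmul (Y ?eb) (D ?ea)"
      unfolding YS[symmetric] by (rule assoc_ll[OF lYb lYa])
    also have "\<dots> = madd (mmul (Y ?eb) (E ?ea)) (mmul (Y ?eb) (mmul S1 (LamPow ?ea)))"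
      unfolding D_def by (rule madd_mmul_right[OF lrf_pf[OF lYb] lrf_pf[OF lYb]])
    also have "mmul (Y ?eb) (mmul S1 (LamPow ?ea)) = mmul (D ?eb) (LamPow ?ea)"
      unfolding YS[symmetric] by (rule assoc_ll[OF lYb lS, symmetric])
    also have "\<dots> = madd (mmul (E ?eb) (LamPow ?ea)) (mmul (mmul S1 (LamPow ?eb)) (LamPow ?ea))"
      unfolding D_def by (rule madd_mmul_left[OF lrf_pf[OF lE] lrf_pf[OF lrf_mmul[OF lS lrf_LamPow]]])
    also have "mmul (mmul S1 (LamPow ?eb)) (LamPow ?ea) = mmul S1 (LamPow ?eab)"
      unfolding assoc_ll[OF lS lrf_LamPow] LamPow_LamPow by (simp add: mi_add_commute)
    finally show ?thesis .
  qed
  show ?thesis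
  proof (intro ext)
    fix \<alpha> \<beta> m
    have e2: "mmul (mderiv ?va (Y ?eb)) S1 \<alpha> \<beta> m
        = mderiv ?va (E ?eb) \<alpha> \<beta> m + mmul (E ?ea) (LamPow ?eb) \<alpha> \<beta> m - mmul (Y ?eb) (E ?ea) \<alpha> \<beta> m"
      using fun_cong[OF fun_cong[OF fun_cong[OF f2a[unfolded f2b]]], of \<alpha> \<beta> m]
      by (simp add: madd_def fadd_def)
    show "mmul (Zm a b) S1 \<alpha> \<beta> m = Nm a b \<alpha> \<beta> m"
      unfolding d Nm_def f1 f3 La Lb
      by (simp add: madd_def mneg_def fadd_def e2)
  qed
qed


lemma uppr_madd: "uppr A \<Longrightarrow> uppr B \<Longrightarrow> uppr (madd A B)"
  unfolding uppr_def madd_def fadd_def by simp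

lemma uppr_mneg: "uppr A \<Longrightarrow> uppr (mneg A)"
  unfolding uppr_def mneg_def by simp

lemma uppr_mmul:
  fixes A B :: "'d fmat"
  shows "uppr A \<Longrightarrow> uppr B \<Longrightarrow> uppr (mmul A B)"
  unfolding uppr_def
proof (intro allI impI)
  fix \<alpha> \<beta> :: "'d mi" and p
  assume u: "\<forall>\<alpha> \<beta> p. mi_len \<beta> < mi_len \<alpha> \<longrightarrow> A \<alpha> \<beta> p = 0"
    "\<forall>\<alpha> \<beta> p. mi_len \<beta> < mi_len \<alpha> \<longrightarrow> B \<alpha> \<beta> p = 0" and lt: "mi_len \<beta> < mi_len \<alpha>"
  show "mmul A B \<alpha> \<beta> p = 0"
  proof (rule ccontr)
    assume "mmul A B \<alpha> \<beta> p \<noteq> 0"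
    from mmul_ne0[OF this] obtain \<gamma> q r where "A \<alpha> \<gamma> q \<noteq> 0" "B \<gamma> \<beta> r \<noteq> 0" by blast
    then have "\<not> mi_len \<gamma> < mi_len \<alpha>" "\<not> mi_len \<beta> < mi_len \<gamma>" using u by blast+
    then show False using lt by simp
  qed
qed

lemma S_const: "mi_len \<alpha> \<le> mi_len \<beta> \<Longrightarrow> \<exists>c. S1 \<alpha> \<beta> = fconst c"
  using blu1 unfolding block_lower_unitriangular_def by (metis le_neq_implies_less)

lemma E_zero: "mi_len \<alpha> \<le> mi_len \<beta> \<Longrightarrow> E g \<alpha> \<beta> m = 0"
  using S_const[of \<alpha> \<beta>] by (auto simp: E_def mderiv_def)

lemma dE_zero: "mi_len \<alpha> \<le> mi_len \<beta> \<Longrightarrow> mderiv v (E g) \<alpha> \<beta> m = 0"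
  using E_zero[of \<alpha> \<beta> g] by (simp add: mderiv_def fderiv_def)

lemma EL_V:
  assumes le: "mi_len \<alpha> \<le> mi_len \<beta>"
  shows "mmul (E (mi_e a)) (Lam b) \<alpha> \<beta> m = Vab S1 a b \<alpha> \<beta> m"
proof (cases "\<exists>\<delta>. \<beta> = mi_add \<delta> (mi_e b)")
  case True
  then obtain \<delta> where d: "\<beta> = mi_add \<delta> (mi_e b)" by blast
  have "mmul (E (mi_e a)) (Lam b) \<alpha> \<beta> m = E (mi_e a) \<alpha> \<delta> m"
    unfolding d Lam_LamPow mmul_LamPow ..
  moreover have "Vab S1 a b \<alpha> \<beta> m = mderiv (T1 (mi_e a)) (beta1 S1) \<alpha> \<delta> m"
    unfolding Vab_def d Lam_LamPow mmul_LamPow ..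
  moreover have "mderiv (T1 (mi_e a)) (beta1 S1) \<alpha> \<delta> m = E (mi_e a) \<alpha> \<delta> m"
  proof (cases "mi_len \<alpha> = mi_len \<delta> + 1")
    case True
    then show ?thesis by (simp add: E_def mderiv_def beta1_def)
  next
    case False
    then have "mi_len \<alpha> \<le> mi_len \<delta>" using le d by simp
    then show ?thesis using False E_zero by (simp add: mderiv_def beta1_def fderiv_def)
  qed
  ultimately show ?thesis by simp
next
  case False
  then show ?thesis unfolding Vab_def Lam_LamPow using mmul_LamPow0 by metis
qed

lemma US_U:
  assumes le: "mi_len \<alpha> \<le> mi_len \<beta>"
  shows "mmul (Uab S1 a b) S1 \<alpha> \<beta> m = Uab S1 a b \<alpha> \<beta> m"
proof -
  have d: "S1 \<gamma> \<beta> = fconst (if \<gamma> = \<beta> then 1 else 0)" if "mi_len \<gamma> = mi_len \<beta>" for \<gamma>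
    using blu1 that unfolding block_lower_unitriangular_def by simp
  have "mmul (Uab S1 a b) S1 \<alpha> \<beta> m = (\<Sum>\<gamma>\<in>{\<beta>}. fmul (Uab S1 a b \<alpha> \<gamma>) (S1 \<gamma> \<beta>) m)"
  proof (rule mmul_sum)
    fix \<gamma> q r assume h: "Uab S1 a b \<alpha> \<gamma> q \<noteq> 0" "S1 \<gamma> \<beta> r \<noteq> 0"
    have "mi_len \<gamma> = mi_len \<alpha>" using U_ne[OF h(1)] .
    moreover have "mi_len \<beta> \<le> mi_len \<gamma>"
      using rbS h(2) unfolding rb_def by fastforce
    ultimately have eq: "mi_len \<gamma> = mi_len \<beta>" using le by simp
    have "fconst (if \<gamma> = \<beta> then 1 else 0) r \<noteq> 0" using h(2) unfolding d[OF eq] .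
    then show "\<gamma> \<in> {\<beta>}" by (cases "\<gamma> = \<beta>") auto
  qed simp
  then show ?thesis by (simp add: d fmul_fconst_right)
qed

lemma N_low:
  assumes le: "mi_len \<alpha> \<le> mi_len \<beta>"
  shows "Nm a b \<alpha> \<beta> m = 0"
proof -
  have "Nm a b \<alpha> \<beta> m = E (mi_add (mi_e a) (mi_e b)) \<alpha> \<beta> m - (mderiv (T1 (mi_e a)) (E (mi_e b)) \<alpha> \<beta> m
     + (mmul (E (mi_e a)) (Lam b) \<alpha> \<beta> m + (mmul (E (mi_e b)) (Lam a) \<alpha> \<beta> m + mmul (Uab S1 a b) S1 \<alpha> \<beta> m)))"
    unfolding Nm_def by (simp add: madd_def mneg_def fadd_def)
  also have "\<dots> = - (Vab S1 a b \<alpha> \<beta> m + (Vab S1 b a \<alpha> \<beta> m + Uab S1 a b \<alpha> \<beta> m))"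
    unfolding EL_V[OF le] EL_V[OF le, of b a] US_U[OF le] E_zero[OF le] dE_zero[OF le] by simp
  also have "\<dots> = 0" by (simp add: Uab_def madd_def mneg_def fadd_def)
  finally show ?thesis .
qed

lemma Z_zero: "Zm a b = mzero"
proof -
  let ?ea = "mi_e a" and ?eb = "mi_e b" and ?eab = "mi_add (mi_e a) (mi_e b)" and ?va = "T1 (mi_e a)"
  have lZ: "lrf (Zm a b)" unfolding Zm_def
    by (intro lrf_madd lrf_mneg lrf_mderiv lrf_mmul lY lU)
  have uZ: "uppr (Zm a b)" unfolding Zm_def
    by (intro uppr_madd uppr_mneg uppr_mderiv uppr_mmul uY uU)
  have Z: "Zm a b = mmul (Nm a b) Si"
    unfolding ZS[symmetric] assoc_ll[OF lZ lS] SSi mmul_mone_right ..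
  show ?thesis
  proof (intro ext)
    fix \<alpha> \<beta> m
    show "Zm a b \<alpha> \<beta> m = mzero \<alpha> \<beta> m"
    proof (cases "mi_len \<beta> < mi_len \<alpha>")
      case True then show ?thesis using uZ by (simp add: uppr_def mzero_def)
    next
      case False
      have "mmul (Nm a b) Si \<alpha> \<beta> m = 0"
      proof (rule ccontr)
        assume "mmul (Nm a b) Si \<alpha> \<beta> m \<noteq> 0"
        from mmul_ne0[OF this] obtain \<gamma> q r where h: "Nm a b \<alpha> \<gamma> q \<noteq> 0" "Si \<gamma> \<beta> r \<noteq> 0" by blast
        from h(1) N_low have "mi_len \<gamma> < mi_len \<alpha>" by (meson not_le)
        moreover from h(2) rbSi have "mi_len \<beta> \<le> mi_len \<gamma>" unfolding rb_def by fastforce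
        ultimately show False using False by simp
      qed
      then show ?thesis using Z by (simp add: mzero_def)
    qed
  qed
qed

lemma N_zero: "Nm a b = mzero"
  unfolding ZS[symmetric] Z_zero mmul_mzero_left ..


lemma lW1: "lrf (W0 (T1::'d mi \<Rightarrow> 'd tvar))" by (rule lrf_W[OF tl_T1' inj_T1])

definition "M = mmul S1 (W0 T1)"

lemma lM: "lrf M" unfolding M_def by (rule lrf_mmul[OF lS lW1])

lemma dM: "mderiv (T1 g) M = mmul (D g) (W0 T1)"
proof -
  have lSL: "lrf (mmul S1 (LamPow g))" by (rule lrf_mmul[OF lS lrf_LamPow])
  have "mderiv (T1 g) M = madd (mmul (E g) (W0 T1)) (mmul S1 (mmul (LamPow g) (W0 T1)))"
    unfolding M_def mderiv_mmul[OF lrf_pf[OF lS]] mderiv_W[OF tl_T1' inj_T1] E_def ..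
  also have "mmul S1 (mmul (LamPow g) (W0 T1)) = mmul (mmul S1 (LamPow g)) (W0 T1)"
    by (rule assoc_ll[OF lS lrf_LamPow, symmetric])
  also have "madd (mmul (E g) (W0 T1)) (mmul (mmul S1 (LamPow g)) (W0 T1)) = mmul (D g) (W0 T1)"
    unfolding D_def by (rule madd_mmul_left[OF lrf_pf[OF lE] lrf_pf[OF lSL], symmetric])
  finally show ?thesis .
qed

lemma ddM: "mderiv (T1 g) (mderiv (T1 h) M)
   = mmul (madd (mderiv (T1 g) (D h)) (mmul (D h) (LamPow g))) (W0 T1)"
proof -
  have "mderiv (T1 g) (mderiv (T1 h) M) = madd (mmul (mderiv (T1 g) (D h)) (W0 T1)) (mmul (D h) (mmul (LamPow g) (W0 T1)))"
    unfolding dM mderiv_mmul[OF lrf_pf[OF lD]] mderiv_W[OF tl_T1' inj_T1] ..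
  also have "mmul (D h) (mmul (LamPow g) (W0 T1)) = mmul (mmul (D h) (LamPow g)) (W0 T1)"
    by (rule assoc_ll[OF lD lrf_LamPow, symmetric])
  also have "madd (mmul (mderiv (T1 g) (D h)) (W0 T1)) (mmul (mmul (D h) (LamPow g)) (W0 T1))
      = mmul (madd (mderiv (T1 g) (D h)) (mmul (D h) (LamPow g))) (W0 T1)"
    by (rule madd_mmul_left[OF lrf_pf[OF lrf_mderiv[OF lD]] lrf_pf[OF lrf_mmul[OF lD lrf_LamPow]], symmetric])
  finally show ?thesis .
qed

lemma Dkey: "D (mi_add (mi_e a) (mi_e b))
   = madd (madd (mderiv (T1 (mi_e a)) (D (mi_e b))) (mmul (D (mi_e b)) (LamPow (mi_e a)))) (mmul (Uab S1 a b) S1)"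
proof -
  let ?ea = "mi_e a" and ?eb = "mi_e b" and ?eab = "mi_add (mi_e a) (mi_e b)" and ?va = "T1 (mi_e a)"
  have d1: "mderiv ?va (D ?eb) = madd (mderiv ?va (E ?eb)) (mmul (E ?ea) (LamPow ?eb))"
    unfolding D_def mderiv_madd mderiv_mmul[OF lrf_pf[OF lS]] mderiv_LamPow mmul_mzero_right madd_mzero E_def ..
  have d2: "mmul (D ?eb) (LamPow ?ea) = madd (mmul (E ?eb) (LamPow ?ea)) (mmul S1 (LamPow ?eab))"
  proof -
    have "mmul (D ?eb) (LamPow ?ea) = madd (mmul (E ?eb) (LamPow ?ea)) (mmul (mmul S1 (LamPow ?eb)) (LamPow ?ea))"
      unfolding D_def by (rule madd_mmul_left[OF lrf_pf[OF lE] lrf_pf[OF lrf_mmul[OF lS lrf_LamPow]]])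
    also have "mmul (mmul S1 (LamPow ?eb)) (LamPow ?ea) = mmul S1 (LamPow ?eab)"
      unfolding assoc_ll[OF lS lrf_LamPow] LamPow_LamPow by (simp add: mi_add_commute)
    finally show ?thesis .
  qed
  show ?thesis
  proof (intro ext)
    fix \<alpha> \<beta> m
    have n: "Nm a b \<alpha> \<beta> m = 0" by (simp add: N_zero mzero_def)
    show "D ?eab \<alpha> \<beta> m = madd (madd (mderiv ?va (D ?eb)) (mmul (D ?eb) (LamPow ?ea))) (mmul (Uab S1 a b) S1) \<alpha> \<beta> m"
      unfolding d1 d2 using n unfolding Nm_def D_def Lam_LamPow
      by (simp add: madd_def mneg_def fadd_def algebra_simps)
  qed
qed

lemma key: "mderiv (T1 (mi_add (mi_e a) (mi_e b))) M
   = madd (mderiv (T1 (mi_e a)) (mderiv (T1 (mi_e b)) M)) (mmul (Uab S1 a b) M)"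
proof -
  let ?X = "madd (mderiv (T1 (mi_e a)) (D (mi_e b))) (mmul (D (mi_e b)) (LamPow (mi_e a)))"
  have lX: "lrf ?X" by (intro lrf_madd lrf_mderiv lrf_mmul lD lrf_LamPow)
  have lUS: "lrf (mmul (Uab S1 a b) S1)" by (rule lrf_mmul[OF lU lS])
  have "mderiv (T1 (mi_add (mi_e a) (mi_e b))) M = mmul (madd ?X (mmul (Uab S1 a b) S1)) (W0 T1)"
    unfolding dM Dkey ..
  also have "\<dots> = madd (mmul ?X (W0 T1)) (mmul (mmul (Uab S1 a b) S1) (W0 T1))"
    by (rule madd_mmul_left[OF lrf_pf[OF lX] lrf_pf[OF lUS]])
  also have "mmul (mmul (Uab S1 a b) S1) (W0 T1) = mmul (Uab S1 a b) M"
    unfolding M_def by (rule assoc_ll[OF lU lS])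
  finally show ?thesis unfolding ddM .
qed

lemma main:
  "vderiv (T1 (mi_add (mi_e a) (mi_e b))) (Psi1 S1 z)
       = vadd (vderiv (T1 (mi_e a)) (vderiv (T1 (mi_e b)) (Psi1 S1 z)))
              (mvmul (Uab S1 a b) (Psi1 S1 z))"
proof -
  have P: "Psi1 S1 z = ap M z" unfolding Psi1_ap M_def ..
  have l2: "lrf (mderiv (T1 (mi_e a)) (mderiv (T1 (mi_e b)) M))" by (intro lrf_mderiv lM)
  have l3: "lrf (mmul (Uab S1 a b) M)" by (rule lrf_mmul[OF lU lM])
  show ?thesis
    unfolding P vderiv_ap[OF lM] vderiv_ap[OF lrf_mderiv[OF lM]] mvmul_ap[OF lU lM] vadd_ap[OF l2 l3] key ..
qed

end


theorem mainTheorem10: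
  fixes G :: "('d::finite) mi \<Rightarrow> 'd mi \<Rightarrow> complex"
    and S1 S2 H :: "'d fmat"
    and a b :: 'd
    and z :: "'d \<Rightarrow> complex"
  assumes "block_lower_unitriangular S1"
    and "block_lower_unitriangular S2"
    and "block_diagonal H"
    and "minvertible H"
    and "Gt G = mmul (mmul (minv S1) H) (mtr (minv S2))"
  shows "vderiv (T1 (mi_add (mi_e a) (mi_e b))) (Psi1 S1 z)
       = vadd (vderiv (T1 (mi_e a)) (vderiv (T1 (mi_e b)) (Psi1 S1 z)))
              (mvmul (Uab S1 a b) (Psi1 S1 z))"
  by (rule main[OF assms])

end
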